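(* The following hold: (a) For $f\in\mathcal{C}_b(\mathcal{Z})$, $\lim_{\lambda\to 0}\|R_{\lambda}f-\Pi f\|_{\infty}=0$. (b) For $f\in\mathcal{C}_b(\mathcal{Z})$, $\lim_{\lambda\to 0}\|P_{\lambda}^{L}f-Q\Pi f\|_{\infty}=0$. (c) Any i.p.m. $\mu_{\lambda}$ of $P_{\lambda}$ is also an i.p.m. of $P_{\lambda}^{L}$. (d) Any weak limit point in $\mathfrak{P}(\mathcal{Z})$ of $\mu_{\lambda}$, as $\lambda\to 0$, is an i.p.m. of $Q\Pi$.
   Context: Consider a finite strategic-form game with agents $\mathcal{I}=\{1,\dots,n\}$, finite action sets $\mathcal{A}_i$, $\mathcal{A}=\mathcal{A}_1\times\cdots\times\mathcal{A}_n$, and utilities $u_i:\mathcal{A}\to\mathbb{R}$ with $u_i(\alpha)>0$ for all $i,\alpha$ (positive-utility property). Under perturbed learning automata, at each time $t$ each agent $i$ with strategy $x_i(t)\in\Delta(|\mathcal{A}_i|)$ selects $\alpha_i(t+1)$ according to $x_i(t)$ with probability $1-\lambda$ and uniformly at random from $\mathcal{A}_i$ with probability $\lambda>0$ (it "trembles"), receives $u_i(\alpha(t+1))$, and updates $x_i(t+1)=x_i(t)+\epsilon\,u_i(\alpha(t+1))\,[e_{\alpha_i(t+1)}-x_i(t)]$ with constant step size $\epsilon>0$ small enough that $0<\epsilon u_i(\alpha)<1$ for all $i,\alpha$. The state space is $\mathcal{Z}=\mathcal{A}\times\mathcal{X}$, $\mathcal{X}=\prod_i\Delta(|\mathcal{A}_i|)$;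 $P_\lambda$ is the transition probability function (t.p.f.) of this Markov chain and $P$ the t.p.f. of the unperturbed process ($\lambda=0$). $\mathcal{C}_b(\mathcal{Z})$ is the space of bounded continuous real functions on $\mathcal{Z}$ with sup-norm, $\mathfrak{P}(\mathcal{Z})$ the probability measures on $\mathcal{Z}$ with the weak topology, and an i.p.m. is an invariant probability measure. $\Pi$ is a t.p.f. on $\mathcal{Z}$ such that $\lim_{t\to\infty}\|P^tf-\Pi f\|_\infty=0$ for all $f\in\mathcal{C}_b(\mathcal{Z})$, whose support is contained in the set of pure strategy states (states $(\alpha,x)$ with $x_i=e_{\alpha_i}$ for all $i$). Write $P_\lambda=(1-\varphi(\lambda))P+\varphi(\lambda)Q_\lambda$, where $\varphi(\lambda)=1-(1-\lambda)^n$ is the probability that at least one agent trembles and $Q_\lambda$ is the t.p.f. when at least one agent trembles; further $Q_\lambda=(1-\psi(\lambda))Q+\psi(\lambda)Q^*$, where $Q$ is the t.p.f. when exactly one agent trembles, $Q^*$ the t.p.f. when at least two tremble, and $\psi(\lambda)=1-\frac{n\lambda(1-\lambda)^{n-1}}{1-(1-\lambda)^n}\to 0$ as $\lambda\downarrow 0$. Define the resolvent $R_\lambda=\varphi(\lambda)\sum_{t=0}^\infty(1-\varphi(\lambda))^tP^t$ and the lifted t.p.f. $P^L_\lambda=Q_\lambda R_\lambda$. *)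

theory Defs
  imports "HOL-Probability.Probability"
begin

text \<open>Agents are 0,...,n-1; agent i has actions 0,...,m i - 1.
  A state is a pair (alpha, x) of an action profile and a strategy profile.
  Functions are extensional (value undefined outside the agent range).
  The state type carries the product topology (Function_Topology), which on the
  state set coincides with the usual topology of A times X (A discrete, X Euclidean).\<close>

type_synonym state = "(nat \<Rightarrow> nat) \<times> (nat \<Rightarrow> nat \<Rightarrow> real)"

definition profiles :: "nat \<Rightarrow> (nat \<Rightarrow> nat) \<Rightarrow> (nat \<Rightarrow> nat) set" where
  "profiles n m = PiE {..<n} (\<lambda>i. {..<m i})"

definition strat_simplex :: "nat \<Rightarrow> (nat \<Rightarrow> real) set" where
  "strat_simplex k = {v. (\<forall>j<k. 0 \<le> v j) \<and> (\<forall>j\<ge>k. v j = 0) \<and> sum v {..<k} = 1}"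

definition strategies :: "nat \<Rightarrow> (nat \<Rightarrow> nat) \<Rightarrow> (nat \<Rightarrow> nat \<Rightarrow> real) set" where
  "strategies n m = PiE {..<n} (\<lambda>i. strat_simplex (m i))"

definition states :: "nat \<Rightarrow> (nat \<Rightarrow> nat) \<Rightarrow> state set" where
  "states n m = profiles n m \<times> strategies n m"

definition unitvec :: "nat \<Rightarrow> nat \<Rightarrow> real" where
  "unitvec j = (\<lambda>k. if k = j then 1 else 0)"

definition pure_states :: "nat \<Rightarrow> (nat \<Rightarrow> nat) \<Rightarrow> state set" where
  "pure_states n m = {z \<in> states n m. \<forall>i<n. snd z i = unitvec (fst z i)}"

definition update :: "nat \<Rightarrow> (nat \<Rightarrow> (nat \<Rightarrow> nat) \<Rightarrow> real) \<Rightarrow> real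
    \<Rightarrow> (nat \<Rightarrow> nat \<Rightarrow> real) \<Rightarrow> (nat \<Rightarrow> nat) \<Rightarrow> (nat \<Rightarrow> nat \<Rightarrow> real)" where
  "update n u eps x a =
     restrict (\<lambda>i k. x i k + eps * u i a * (unitvec (a i) k - x i k)) {..<n}"

definition strat_pmf :: "nat \<Rightarrow> (nat \<Rightarrow> real) \<Rightarrow> nat pmf" where
  "strat_pmf k v = embed_pmf (\<lambda>j. if j < k then v j else 0)"

definition Plam :: "nat \<Rightarrow> (nat \<Rightarrow> nat) \<Rightarrow> (nat \<Rightarrow> (nat \<Rightarrow> nat) \<Rightarrow> real) \<Rightarrow> real
    \<Rightarrow> real \<Rightarrow> state \<Rightarrow> state pmf" where
  "Plam n m u eps lam z =
     map_pmf (\<lambda>a. (a, update n u eps (snd z) a))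
       (Pi_pmf {..<n} undefined
          (\<lambda>i. bind_pmf (bernoulli_pmf lam)
                 (\<lambda>b. if b then pmf_of_set {..<m i} else strat_pmf (m i) (snd z i))))"

definition step :: "nat \<Rightarrow> (nat \<Rightarrow> nat) \<Rightarrow> (nat \<Rightarrow> (nat \<Rightarrow> nat) \<Rightarrow> real) \<Rightarrow> real
    \<Rightarrow> nat set \<Rightarrow> state \<Rightarrow> state pmf" where
  "step n m u eps S z =
     map_pmf (\<lambda>a. (a, update n u eps (snd z) a))
       (Pi_pmf {..<n} undefined
          (\<lambda>i. if i \<in> S then pmf_of_set {..<m i} else strat_pmf (m i) (snd z i)))"

definition tremble_pmf :: "nat \<Rightarrow> real \<Rightarrow> nat set pmf" where
  "tremble_pmf n lam =
     map_pmf (\<lambda>b. {i \<in> {..<n}. b i}) (Pi_pmf {..<n} False (\<lambda>_. bernoulli_pmf lam))"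

definition Qlam :: "nat \<Rightarrow> (nat \<Rightarrow> nat) \<Rightarrow> (nat \<Rightarrow> (nat \<Rightarrow> nat) \<Rightarrow> real) \<Rightarrow> real
    \<Rightarrow> real \<Rightarrow> state \<Rightarrow> state pmf" where
  "Qlam n m u eps lam z =
     bind_pmf (cond_pmf (tremble_pmf n lam) {S. S \<noteq> {}}) (\<lambda>S. step n m u eps S z)"

definition Qone :: "nat \<Rightarrow> (nat \<Rightarrow> nat) \<Rightarrow> (nat \<Rightarrow> (nat \<Rightarrow> nat) \<Rightarrow> real) \<Rightarrow> real
    \<Rightarrow> state \<Rightarrow> state pmf" where
  "Qone n m u eps z =
     bind_pmf (pmf_of_set ((\<lambda>k. {k}) ` {..<n})) (\<lambda>S. step n m u eps S z)"

definition kcomp :: "('a \<Rightarrow> 'b pmf) \<Rightarrow> ('b \<Rightarrow> 'c pmf) \<Rightarrow> 'a \<Rightarrow> 'c pmf" where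
  "kcomp K L z = bind_pmf (K z) L"

fun kpow :: "('a \<Rightarrow> 'a pmf) \<Rightarrow> nat \<Rightarrow> 'a \<Rightarrow> 'a pmf" where
  "kpow K 0 = return_pmf"
| "kpow K (Suc t) = kcomp (kpow K t) K"

definition kapply :: "('a \<Rightarrow> 'b pmf) \<Rightarrow> ('b \<Rightarrow> real) \<Rightarrow> 'a \<Rightarrow> real" where
  "kapply K f z = measure_pmf.expectation (K z) f"

definition phi :: "nat \<Rightarrow> real \<Rightarrow> real" where
  "phi n lam = 1 - (1 - lam) ^ n"

text \<open>Resolvent phi * sum_t (1-phi)^t P^t, as a geometric mixture of the P^t.\<close>
definition Rlam :: "nat \<Rightarrow> (nat \<Rightarrow> nat) \<Rightarrow> (nat \<Rightarrow> (nat \<Rightarrow> nat) \<Rightarrow> real) \<Rightarrow> real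
    \<Rightarrow> real \<Rightarrow> state \<Rightarrow> state pmf" where
  "Rlam n m u eps lam z =
     bind_pmf (geometric_pmf (phi n lam)) (\<lambda>t. kpow (Plam n m u eps 0) t z)"

definition PL :: "nat \<Rightarrow> (nat \<Rightarrow> nat) \<Rightarrow> (nat \<Rightarrow> (nat \<Rightarrow> nat) \<Rightarrow> real) \<Rightarrow> real
    \<Rightarrow> real \<Rightarrow> state \<Rightarrow> state pmf" where
  "PL n m u eps lam = kcomp (Qlam n m u eps lam) (Rlam n m u eps lam)"

definition Cb :: "'a::topological_space set \<Rightarrow> ('a \<Rightarrow> real) \<Rightarrow> bool" where
  "Cb Z f \<longleftrightarrow> continuous_on Z f \<and> bounded (f ` Z)"

definition supnorm :: "'a set \<Rightarrow> ('a \<Rightarrow> real) \<Rightarrow> real" where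
  "supnorm Z g = (SUP z\<in>Z. \<bar>g z\<bar>)"

definition prob_measures :: "'a::topological_space set \<Rightarrow> 'a measure set" where
  "prob_measures Z = {M. prob_space M \<and> sets M = sets (restrict_space borel Z)}"

definition ipm :: "'a::topological_space set \<Rightarrow> ('a \<Rightarrow> 'a pmf) \<Rightarrow> 'a measure \<Rightarrow> bool" where
  "ipm Z K M \<longleftrightarrow> M \<in> prob_measures Z \<and>
     (\<forall>B \<in> sets M. (\<integral>\<^sup>+ z. emeasure (measure_pmf (K z)) B \<partial>M) = emeasure M B)"

definition weak_conv_Cb :: "'a::topological_space set \<Rightarrow> (nat \<Rightarrow> 'a measure) \<Rightarrow> 'a measure \<Rightarrow> bool" where
  "weak_conv_Cb Z Ms M \<longleftrightarrow>
     (\<forall>f. Cb Z f \<longrightarrow> (\<lambda>k. \<integral> z. f z \<partial>Ms k) \<longlonglongrightarrow> (\<integral> z. f z \<partial>M))"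

end

theory Submission
  imports Defs
begin


abbreviation MZ :: "'a::topological_space set \<Rightarrow> 'a measure" where "MZ Z \<equiv> restrict_space borel Z"

lemma space_MZ[simp]: "space (MZ Z) = Z" by (simp add: space_restrict_space)

lemma sets_MZ_sub: "B \<in> sets (MZ Z) \<Longrightarrow> B \<subseteq> Z"
  using sets.sets_into_space[of B "MZ Z"] by simp

definition ksupp :: "'a set \<Rightarrow> ('a \<Rightarrow> 'a pmf) \<Rightarrow> bool" where
  "ksupp Z K \<longleftrightarrow> (\<forall>z\<in>Z. set_pmf (K z) \<subseteq> Z)"

definition kmeas :: "'a::topological_space set \<Rightarrow> ('a \<Rightarrow> 'a pmf) \<Rightarrow> bool" where
  "kmeas Z K \<longleftrightarrow> (\<forall>B\<in>sets (MZ Z). (\<lambda>z. emeasure (measure_pmf (K z)) B) \<in> borel_measurable (MZ Z))"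

definition kk :: "'a::topological_space set \<Rightarrow> ('a \<Rightarrow> 'a pmf) \<Rightarrow> 'a \<Rightarrow> 'a measure" where
  "kk Z K z = distr (restrict_space (measure_pmf (K z)) Z) (MZ Z) (\<lambda>x. x)"

lemma id_meas_kk: "(\<lambda>x. x) \<in> measurable (restrict_space (measure_pmf p) Z) (MZ Z)"
proof (rule measurableI)
  fix x assume "x \<in> space (restrict_space (measure_pmf p) Z)"
  thus "x \<in> space (MZ Z)" by (simp add: space_restrict_space)
next
  fix A assume "A \<in> sets (MZ Z)"
  then have "A \<subseteq> Z" by (rule sets_MZ_sub)
  then show "(\<lambda>x. x) -` A \<inter> space (restrict_space (measure_pmf p) Z) \<in> sets (restrict_space (measure_pmf p) Z)"
    unfolding sets_restrict_space space_restrict_space by (auto intro!: image_eqI[where x=A])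
qed

lemma kk_emeasure: "B \<in> sets (MZ Z) \<Longrightarrow> emeasure (kk Z K z) B = emeasure (measure_pmf (K z)) B"
proof -
  assume B: "B \<in> sets (MZ Z)"
  hence BZ: "B \<subseteq> Z" by (rule sets_MZ_sub)
  have "emeasure (kk Z K z) B = emeasure (restrict_space (measure_pmf (K z)) Z) (B \<inter> Z)"
    unfolding kk_def by (subst emeasure_distr[OF id_meas_kk B]) (simp add: space_restrict_space)
  also have "\<dots> = emeasure (measure_pmf (K z)) B"
    using BZ by (subst emeasure_restrict_space) (auto simp: Int_absorb2)
  finally show ?thesis .
qed

lemma sets_kk[simp]: "sets (kk Z K z) = sets (MZ Z)"
  unfolding kk_def by simp

lemma kk_nn:
  assumes g: "g \<in> borel_measurable (MZ Z)" and s: "set_pmf (K z) \<subseteq> Z"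
  shows "(\<integral>\<^sup>+w. g w \<partial>kk Z K z) = (\<integral>\<^sup>+w. g w \<partial>measure_pmf (K z))"
proof -
  have "(\<integral>\<^sup>+w. g w \<partial>kk Z K z) = (\<integral>\<^sup>+w. g w \<partial>restrict_space (measure_pmf (K z)) Z)"
    unfolding kk_def by (subst nn_integral_distr[OF id_meas_kk]) (use g in auto)
  also have "\<dots> = (\<integral>\<^sup>+w. g w * indicator Z w \<partial>measure_pmf (K z))"
    by (subst nn_integral_restrict_space) (auto simp: mult.commute)
  also have "\<dots> = (\<integral>\<^sup>+w. g w \<partial>measure_pmf (K z))"
    using s by (intro nn_integral_cong_AE) (auto simp: AE_measure_pmf_iff)
  finally show ?thesis .
qed

lemma kk_int:
  fixes g :: "'a::topological_space \<Rightarrow> real"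
  assumes g: "g \<in> borel_measurable (MZ Z)" and s: "set_pmf (K z) \<subseteq> Z"
  shows "integral\<^sup>L (kk Z K z) g = measure_pmf.expectation (K z) g"
proof -
  have "integral\<^sup>L (kk Z K z) g = integral\<^sup>L (restrict_space (measure_pmf (K z)) Z) g"
    unfolding kk_def by (subst integral_distr[OF id_meas_kk]) (use g in auto)
  also have "\<dots> = (\<integral>w. indicator Z w *\<^sub>R g w \<partial>measure_pmf (K z))"
    by (subst integral_restrict_space) auto
  also have "\<dots> = measure_pmf.expectation (K z) g"
    using s by (intro integral_cong_AE) (auto simp: AE_measure_pmf_iff)
  finally show ?thesis .
qed

lemma kk_prob:
  assumes s: "set_pmf (K z) \<subseteq> Z"
  shows "prob_space (kk Z K z)"
proof -
  have "emeasure (measure_pmf (K z)) Z = 1"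
    using s by (simp add: measure_pmf.emeasure_eq_1_AE AE_measure_pmf_iff subset_iff)
  then have "prob_space (restrict_space (measure_pmf (K z)) Z)"
    by (intro prob_space_restrict_space) auto
  then show ?thesis unfolding kk_def by (intro prob_space.prob_space_distr id_meas_kk)
qed

lemma kk_measurable:
  assumes "ksupp Z K" "kmeas Z K"
  shows "kk Z K \<in> measurable (MZ Z) (subprob_algebra (MZ Z))"
proof (rule measurable_subprob_algebra)
  fix a assume "a \<in> space (MZ Z)"
  then show "subprob_space (kk Z K a)"
    using assms(1) kk_prob[of K a Z] by (auto simp: ksupp_def prob_space_imp_subprob_space)
  show "sets (kk Z K a) = sets (MZ Z)" by simp
next
  fix A assume A: "A \<in> sets (MZ Z)"
  have "(\<lambda>z. emeasure (measure_pmf (K z)) A) \<in> borel_measurable (MZ Z)"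
    using assms(2) A by (auto simp: kmeas_def)
  then show "(\<lambda>a. emeasure (kk Z K a) A) \<in> borel_measurable (MZ Z)"
    by (subst kk_emeasure[OF A])
qed

lemma kmeas_nn:
  assumes "ksupp Z K" "kmeas Z K" and g: "g \<in> borel_measurable (MZ Z)"
  shows "(\<lambda>z. \<integral>\<^sup>+w. g w \<partial>measure_pmf (K z)) \<in> borel_measurable (MZ Z)"
proof -
  have "(\<lambda>z. \<integral>\<^sup>+w. g w \<partial>kk Z K z) \<in> borel_measurable (MZ Z)"
    using measurable_compose[OF kk_measurable[OF assms(1,2)] nn_integral_measurable_subprob_algebra[OF g]] .
  then show ?thesis
    by (rule measurable_cong[THEN iffD1, rotated])
       (use assms(1) in \<open>auto simp: ksupp_def intro!: kk_nn[OF g]\<close>)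
qed

lemma kmeas_int:
  fixes g :: "'a::topological_space \<Rightarrow> real"
  assumes "ksupp Z K" "kmeas Z K" and g: "g \<in> borel_measurable (MZ Z)"
  shows "kapply K g \<in> borel_measurable (MZ Z)"
proof -
  have "(\<lambda>z. integral\<^sup>L (kk Z K z) g) \<in> borel_measurable (MZ Z)"
    using measurable_compose[OF kk_measurable[OF assms(1,2)] integral_measurable_subprob_algebra[OF g]] .
  then show ?thesis unfolding kapply_def
    by (rule measurable_cong[THEN iffD1, rotated])
       (use assms(1) in \<open>auto simp: ksupp_def intro!: kk_int[OF g]\<close>)
qed

lemma ipm_iff_bind:
  assumes M: "M \<in> prob_measures Z" and K: "ksupp Z K" "kmeas Z K"
  shows "ipm Z K M \<longleftrightarrow> bind M (kk Z K) = M"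
proof -
  have sM: "sets M = sets (MZ Z)" and pM: "prob_space M" using M by (auto simp: prob_measures_def)
  have ne: "space M \<noteq> {}" using pM prob_space.not_empty by blast
  have km: "kk Z K \<in> measurable M (subprob_algebra (MZ Z))"
    using measurable_cong_sets[OF sM refl] kk_measurable[OF K] by blast
  have sb: "sets (bind M (kk Z K)) = sets M"
    using sM ne by (subst sets_bind) auto
  have em: "emeasure (bind M (kk Z K)) B = (\<integral>\<^sup>+z. emeasure (measure_pmf (K z)) B \<partial>M)"
    if B: "B \<in> sets M" for B
    using B sM by (subst emeasure_bind[OF ne km]) (auto simp: kk_emeasure)
  show ?thesis
  proof
    assume "ipm Z K M"
    then show "bind M (kk Z K) = M"
      by (intro measure_eqI) (use sb em in \<open>auto simp: ipm_def\<close>)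
  next
    assume "bind M (kk Z K) = M"
    then show "ipm Z K M" using M em sM unfolding ipm_def by metis
  qed
qed

lemma inv_int:
  fixes g :: "'a::topological_space \<Rightarrow> real"
  assumes M: "M \<in> prob_measures Z" and K: "ksupp Z K" "kmeas Z K" and I: "ipm Z K M"
    and g: "g \<in> borel_measurable (MZ Z)" and gb: "\<And>z. z \<in> Z \<Longrightarrow> \<bar>g z\<bar> \<le> C"
  shows "integral\<^sup>L M g = (\<integral>z. kapply K g z \<partial>M)"
proof -
  have sM: "sets M = sets (MZ Z)" and pM: "prob_space M" using M by (auto simp: prob_measures_def)
  have spM: "space M = Z" using sets_eq_imp_space_eq[OF sM] by simp
  have km: "kk Z K \<in> measurable M (subprob_algebra (MZ Z))"
    using measurable_cong_sets[OF sM refl] kk_measurable[OF K] by blast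
  have "bind M (kk Z K) = M" using ipm_iff_bind[OF M K] I by simp
  then have "integral\<^sup>L M g = integral\<^sup>L (bind M (kk Z K)) g" by simp
  also have "\<dots> = (\<integral>z. integral\<^sup>L (kk Z K z) g \<partial>M)"
  proof (rule integral_bind[OF g _ km])
    show "\<And>x. x \<in> space (MZ Z) \<Longrightarrow> \<bar>g x\<bar> \<le> C" using gb by simp
    show "finite_measure M" using pM by (rule prob_space.axioms(1))
    show "AE x in M. emeasure (kk Z K x) (space (kk Z K x)) \<le> ennreal 1"
      using km by (auto intro!: AE_I2 subprob_space.subprob_emeasure_le_1 simp: measurable_space space_subprob_algebra dest!: measurable_space)
  qed
  also have "\<dots> = (\<integral>z. kapply K g z \<partial>M)"
    using K(1) by (intro Bochner_Integration.integral_cong refl) (auto simp: spM kapply_def ksupp_def intro!: kk_int[OF g])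
  finally show ?thesis .
qed


lemma exp_int:
  fixes g :: "'a \<Rightarrow> real"
  assumes "set_pmf p \<subseteq> Z" "\<And>w. w \<in> Z \<Longrightarrow> \<bar>g w\<bar> \<le> C"
  shows "integrable (measure_pmf p) g"
  by (rule measure_pmf.integrable_const_bound[where B=C]) (use assms in \<open>auto simp: AE_measure_pmf_iff\<close>)

lemma exp_bound:
  fixes g :: "'a \<Rightarrow> real"
  assumes "set_pmf p \<subseteq> Z" "\<And>w. w \<in> Z \<Longrightarrow> \<bar>g w\<bar> \<le> C"
  shows "\<bar>measure_pmf.expectation p g\<bar> \<le> C"
proof -
  have "\<bar>measure_pmf.expectation p g\<bar> \<le> measure_pmf.expectation p (\<lambda>w. \<bar>g w\<bar>)"
    by (rule integral_abs_bound)
  also have "\<dots> \<le> C"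
    by (rule measure_pmf.integral_le_const) (use assms in \<open>auto simp: AE_measure_pmf_iff intro!: exp_int[where C=C]\<close>)
  finally show ?thesis .
qed

lemma exp_bind:
  fixes g :: "'a \<Rightarrow> real"
  assumes s: "\<And>y. y \<in> set_pmf p \<Longrightarrow> set_pmf (K y) \<subseteq> Z" and b: "\<And>w. w \<in> Z \<Longrightarrow> \<bar>g w\<bar> \<le> C"
  shows "measure_pmf.expectation (bind_pmf p K) g =
         measure_pmf.expectation p (\<lambda>y. measure_pmf.expectation (K y) g)"
proof -
  obtain y where y: "y \<in> set_pmf p" by (meson ex_in_conv set_pmf_not_empty)
  obtain w where w: "w \<in> set_pmf (K y)" by (meson ex_in_conv set_pmf_not_empty)
  have C0: "0 \<le> C" using b[of w] s[OF y] w by auto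
  define g' where "g' w = (if w \<in> Z then g w else 0)" for w
  have 1: "measure_pmf.expectation (bind_pmf p K) g = measure_pmf.expectation (bind_pmf p K) g'"
    by (intro integral_cong_AE) (use s in \<open>auto simp: AE_measure_pmf_iff g'_def\<close>)
  have 2: "measure_pmf.expectation (bind_pmf p K) g' = (\<integral>y. measure_pmf.expectation (K y) g' \<partial>measure_pmf p)"
    unfolding measure_pmf_bind
  proof (rule integral_bind[where K="count_space UNIV" and B=C and B'=1])
    show "g' \<in> borel_measurable (count_space UNIV)" by simp
    show "\<And>x. x \<in> space (count_space UNIV) \<Longrightarrow> \<bar>g' x\<bar> \<le> C" using b C0 by (auto simp: g'_def)
    show "(\<lambda>x. measure_pmf (K x)) \<in> measure_pmf p \<rightarrow>\<^sub>M subprob_algebra (count_space UNIV)"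
      using measurable_measure_pmf[of K] by (simp add: measurable_cong_sets)
    show "finite_measure (measure_pmf p)" by (rule prob_space.axioms(1)) (rule prob_space_measure_pmf)
    show "AE x in measure_pmf p. emeasure (measure_pmf (K x)) (space (measure_pmf (K x))) \<le> ennreal 1"
      by (simp add: measure_pmf.emeasure_space_1)
  qed
  have 3: "(\<integral>y. measure_pmf.expectation (K y) g' \<partial>measure_pmf p) = measure_pmf.expectation p (\<lambda>y. measure_pmf.expectation (K y) g)"
    by (intro integral_cong_AE) (auto simp: AE_measure_pmf_iff g'_def dest!: s intro!: integral_cong_AE)
  show ?thesis using 1 2 3 by simp
qed

lemma emeasure_bind_pmf': "emeasure (measure_pmf (bind_pmf p K)) B = (\<integral>\<^sup>+y. emeasure (measure_pmf (K y)) B \<partial>measure_pmf p)"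
  using nn_integral_bind_pmf[where f="indicator B" and M=p and N=K] by (simp add: nn_integral_indicator)

lemma kcomp_supp: "ksupp Z K \<Longrightarrow> ksupp Z L \<Longrightarrow> ksupp Z (kcomp K L)"
  by (fastforce simp: ksupp_def kcomp_def set_bind_pmf)

lemma kcomp_meas: "ksupp Z K \<Longrightarrow> kmeas Z K \<Longrightarrow> kmeas Z L \<Longrightarrow> kmeas Z (kcomp K L)"
  unfolding kmeas_def kcomp_def emeasure_bind_pmf'
  by (auto intro!: kmeas_nn simp: kmeas_def)

lemma kapply_kcomp:
  assumes "ksupp Z K" "ksupp Z L" "z \<in> Z" "\<And>w. w \<in> Z \<Longrightarrow> \<bar>g w\<bar> \<le> C"
  shows "kapply (kcomp K L) g z = kapply K (kapply L g) z"
  unfolding kapply_def kcomp_def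
  by (rule exp_bind[where Z=Z and C=C]) (use assms in \<open>auto simp: ksupp_def\<close>)

lemma return_supp: "ksupp Z return_pmf" by (simp add: ksupp_def)

lemma return_meas: "kmeas Z return_pmf"
  unfolding kmeas_def
proof safe
  fix B assume B: "B \<in> sets (MZ Z)"
  have "(\<lambda>z. emeasure (measure_pmf (return_pmf z)) B) = (\<lambda>z. indicator B z)"
    by (auto simp: measure_return_pmf[symmetric] emeasure_return simp del: measure_return_pmf)
  then show "(\<lambda>z. emeasure (measure_pmf (return_pmf z)) B) \<in> borel_measurable (MZ Z)"
    using B by simp
qed

lemma kpow_Suc': "kpow K (Suc t) = kcomp K (kpow K t)"
proof (induction t)
  case 0 show ?case by (simp add: kcomp_def fun_eq_iff bind_return_pmf bind_return_pmf')
next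
  case (Suc t)
  have "kpow K (Suc (Suc t)) = kcomp (kcomp K (kpow K t)) K" using Suc by simp
  also have "\<dots> = kcomp K (kpow K (Suc t))" unfolding kpow.simps kcomp_def by (simp add: bind_assoc_pmf)
  finally show ?case .
qed

lemma kpow_supp: "ksupp Z K \<Longrightarrow> ksupp Z (kpow K t)"
  by (induction t) (auto intro: kcomp_supp return_supp)

lemma kpow_meas: "ksupp Z K \<Longrightarrow> kmeas Z K \<Longrightarrow> kmeas Z (kpow K t)"
  by (induction t) (auto intro: kcomp_meas return_meas kpow_supp)

lemma mix_supp: "(\<And>s. s \<in> set_pmf p \<Longrightarrow> ksupp Z (K s)) \<Longrightarrow> ksupp Z (\<lambda>z. bind_pmf p (\<lambda>s. K s z))"
  by (fastforce simp: ksupp_def set_bind_pmf)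

lemma mix_meas_fin:
  assumes "finite (set_pmf p)" "\<And>s. s \<in> set_pmf p \<Longrightarrow> kmeas Z (K s)"
  shows "kmeas Z (\<lambda>z. bind_pmf p (\<lambda>s. K s z))"
  unfolding kmeas_def emeasure_bind_pmf'
proof safe
  fix B assume B: "B \<in> sets (MZ Z)"
  have "(\<lambda>z. \<integral>\<^sup>+s. emeasure (measure_pmf (K s z)) B \<partial>measure_pmf p) =
        (\<lambda>z. \<Sum>s\<in>set_pmf p. emeasure (measure_pmf (K s z)) B * ennreal (pmf p s))"
    by (subst nn_integral_measure_pmf_finite[OF assms(1)]) auto
  also have "\<dots> \<in> borel_measurable (MZ Z)"
    using assms(2) B by (intro borel_measurable_sum borel_measurable_times_ennreal) (auto simp: kmeas_def)
  finally show "(\<lambda>z. \<integral>\<^sup>+s. emeasure (measure_pmf (K s z)) B \<partial>measure_pmf p) \<in> borel_measurable (MZ Z)" .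
qed

lemma mix_meas_nat:
  fixes p :: "nat pmf"
  assumes "\<And>s. kmeas Z (K s)"
  shows "kmeas Z (\<lambda>z. bind_pmf p (\<lambda>s. K s z))"
  unfolding kmeas_def emeasure_bind_pmf'
proof safe
  fix B assume B: "B \<in> sets (MZ Z)"
  have "(\<lambda>z. \<integral>\<^sup>+s. emeasure (measure_pmf (K s z)) B \<partial>measure_pmf p) =
        (\<lambda>z. \<Sum>s. ennreal (pmf p s) * emeasure (measure_pmf (K s z)) B)"
    by (simp add: nn_integral_measure_pmf nn_integral_count_space_nat)
  also have "\<dots> \<in> borel_measurable (MZ Z)"
    using assms B by (intro borel_measurable_suminf_order borel_measurable_times_ennreal) (auto simp: kmeas_def)
  finally show "(\<lambda>z. \<integral>\<^sup>+s. emeasure (measure_pmf (K s z)) B \<partial>measure_pmf p) \<in> borel_measurable (MZ Z)" .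
qed

lemma Cb_bound: "Cb Z f \<Longrightarrow> \<exists>C. \<forall>z\<in>Z. \<bar>f z\<bar> \<le> C"
  unfolding Cb_def bounded_real by auto

lemma Cb_meas: "Cb Z f \<Longrightarrow> f \<in> borel_measurable (MZ Z)"
  unfolding Cb_def by (auto intro: borel_measurable_continuous_on_restrict)

definition kfeller :: "'a::topological_space set \<Rightarrow> ('a \<Rightarrow> 'a pmf) \<Rightarrow> bool" where
  "kfeller Z K \<longleftrightarrow> (\<forall>f. Cb Z f \<longrightarrow> continuous_on Z (kapply K f))"

lemma Cb_kapply: "ksupp Z K \<Longrightarrow> kfeller Z K \<Longrightarrow> Cb Z f \<Longrightarrow> Cb Z (kapply K f)"
proof -
  assume s: "ksupp Z K" and F: "kfeller Z K" and f: "Cb Z f"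
  obtain C where C: "\<forall>z\<in>Z. \<bar>f z\<bar> \<le> C" using Cb_bound[OF f] by blast
  have "\<forall>z\<in>Z. \<bar>kapply K f z\<bar> \<le> C"
    using s C unfolding kapply_def ksupp_def by (auto intro!: exp_bound[where Z=Z])
  then show ?thesis using F f unfolding kfeller_def Cb_def bounded_real by auto
qed

lemma kcomp_feller: "ksupp Z K \<Longrightarrow> ksupp Z L \<Longrightarrow> kfeller Z K \<Longrightarrow> kfeller Z L \<Longrightarrow> kfeller Z (kcomp K L)"
  unfolding kfeller_def
proof safe
  fix f assume sK: "ksupp Z K" and sL: "ksupp Z L" and FK: "\<forall>f. Cb Z f \<longrightarrow> continuous_on Z (kapply K f)"
    and FL: "\<forall>f. Cb Z f \<longrightarrow> continuous_on Z (kapply L f)" and f: "Cb Z f"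
  obtain C where C: "\<forall>z\<in>Z. \<bar>f z\<bar> \<le> C" using Cb_bound[OF f] by blast
  have "Cb Z (kapply L f)" using Cb_kapply[OF sL _ f] FL by (simp add: kfeller_def)
  then have "continuous_on Z (kapply K (kapply L f))" using FK by simp
  then show "continuous_on Z (kapply (kcomp K L) f)"
    by (rule continuous_on_cong[THEN iffD1, rotated 2]) (use kapply_kcomp[OF sK sL _, of _ f C] C in auto)
qed

lemma return_feller: "kfeller Z return_pmf"
  unfolding kfeller_def kapply_def Cb_def by simp

lemma kpow_feller: "ksupp Z K \<Longrightarrow> kfeller Z K \<Longrightarrow> kfeller Z (kpow K t)"
  by (induction t) (auto intro: kcomp_feller return_feller kpow_supp)


lemma strat_pmf_pmf:
  assumes "v \<in> strat_simplex k"
  shows "pmf (strat_pmf k v) j = (if j < k then v j else 0)"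
proof -
  have nn: "\<And>j. 0 \<le> (if j < k then v j else 0)" using assms by (auto simp: strat_simplex_def)
  have "(\<integral>\<^sup>+j. ennreal (if j < k then v j else 0) \<partial>count_space UNIV) = (\<Sum>j<k. ennreal (if j < k then v j else 0))"
    by (rule nn_integral_count_space') auto
  also have "\<dots> = ennreal (\<Sum>j<k. v j)" using assms by (subst sum_ennreal[symmetric]) (auto simp: strat_simplex_def)
  also have "\<dots> = 1" using assms by (simp add: strat_simplex_def)
  finally show ?thesis unfolding strat_pmf_def using nn by (subst pmf_embed_pmf) auto
qed

lemma strat_pmf_set:
  assumes "v \<in> strat_simplex k"
  shows "set_pmf (strat_pmf k v) \<subseteq> {..<k}"
  using strat_pmf_pmf[OF assms] by (auto simp: set_pmf_iff split: if_splits)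

lemma sum_unitvec: "j < k \<Longrightarrow> (\<Sum>l<k. unitvec j l) = 1"
  by (simp add: unitvec_def)

locale game =
  fixes n :: nat and m :: "nat \<Rightarrow> nat" and u :: "nat \<Rightarrow> (nat \<Rightarrow> nat) \<Rightarrow> real" and eps :: real
  assumes n_pos: "n \<ge> 1" and acts: "\<forall>i<n. m i \<ge> 1"
    and upos: "\<forall>i<n. \<forall>a\<in>profiles n m. u i a > 0"
    and eps_pos: "eps > 0" and eps_small: "\<forall>i<n. \<forall>a\<in>profiles n m. eps * u i a < 1"
begin

abbreviation "ZZ \<equiv> states n m"
abbreviation "stp S \<equiv> step n m u eps S"
abbreviation "upd \<equiv> update n u eps"

lemma update_strat:
  assumes x: "x \<in> strategies n m" and a: "a \<in> profiles n m"
  shows "upd x a \<in> strategies n m"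
  unfolding strategies_def
proof (rule PiE_I)
  fix i assume i: "i \<in> {..<n}"
  define c where "c = eps * u i a"
  have c: "0 < c" "c < 1" using upos eps_small eps_pos i a by (auto simp: c_def)
  have xi: "x i \<in> strat_simplex (m i)" using x i by (auto simp: strategies_def)
  have ai: "a i < m i" using a i by (auto simp: profiles_def)
  have eq: "upd x a i = (\<lambda>k. (1 - c) * x i k + c * unitvec (a i) k)"
    using i by (auto simp: update_def c_def algebra_simps fun_eq_iff)
  have s: "(\<Sum>k<m i. (1 - c) * x i k + c * unitvec (a i) k) = 1"
    using xi ai by (simp add: sum.distrib sum_distrib_left[symmetric] strat_simplex_def sum_unitvec)
  show "upd x a i \<in> strat_simplex (m i)"
    unfolding eq strat_simplex_def
    using xi c ai s by (auto simp: strat_simplex_def unitvec_def intro!: add_nonneg_nonneg)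
next
  fix i assume "i \<notin> {..<n}" then show "upd x a i = undefined" by (simp add: update_def)
qed

definition D :: "nat set \<Rightarrow> (nat \<Rightarrow> nat \<Rightarrow> real) \<Rightarrow> nat \<Rightarrow> nat pmf" where
  "D S x i = (if i \<in> S then pmf_of_set {..<m i} else strat_pmf (m i) (x i))"

definition wt :: "nat set \<Rightarrow> (nat \<Rightarrow> nat \<Rightarrow> real) \<Rightarrow> (nat \<Rightarrow> nat) \<Rightarrow> real" where
  "wt S x a = (\<Prod>i<n. if i \<in> S then 1 / real (m i) else x i (a i))"

lemma step_D: "stp S z = map_pmf (\<lambda>a. (a, upd (snd z) a)) (Pi_pmf {..<n} undefined (D S (snd z)))"
  unfolding step_def D_def by simp

lemma set_D: "x \<in> strategies n m \<Longrightarrow> i < n \<Longrightarrow> set_pmf (D S x i) \<subseteq> {..<m i}"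
  using acts strat_pmf_set[of "x i" "m i"]
  by (auto simp: D_def strategies_def set_pmf_of_set lessThan_empty_iff)

lemma set_PiD: "x \<in> strategies n m \<Longrightarrow> set_pmf (Pi_pmf {..<n} undefined (D S x)) \<subseteq> profiles n m"
  using set_Pi_pmf_subset'[of "{..<n}" undefined "D S x"] set_D[of x]
  by (fastforce simp: profiles_def PiE_dflt_def PiE_def extensional_def)

lemma pmf_PiD:
  assumes x: "x \<in> strategies n m" and a: "a \<in> profiles n m"
  shows "pmf (Pi_pmf {..<n} undefined (D S x)) a = wt S x a"
proof -
  have "pmf (Pi_pmf {..<n} undefined (D S x)) a = (\<Prod>i<n. pmf (D S x i) (a i))"
    using a by (intro pmf_Pi') (auto simp: profiles_def PiE_def extensional_def)
  also have "\<dots> = wt S x a"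
    unfolding wt_def
  proof (intro prod.cong refl)
    fix i assume i: "i \<in> {..<n}"
    have ai: "a i < m i" using a i by (auto simp: profiles_def)
    have xi: "x i \<in> strat_simplex (m i)" using x i by (auto simp: strategies_def)
    show "pmf (D S x i) (a i) = (if i \<in> S then 1 / real (m i) else x i (a i))"
      using ai xi by (auto simp: D_def pmf_of_set strat_pmf_pmf lessThan_empty_iff)
  qed
  finally show ?thesis .
qed

lemma step_supp: "ksupp ZZ (stp S)"
  unfolding ksupp_def
proof safe
  fix z w assume z: "z \<in> ZZ" and w: "w \<in> set_pmf (stp S z)"
  then obtain a where a: "a \<in> set_pmf (Pi_pmf {..<n} undefined (D S (snd z)))" and wa: "w = (a, upd (snd z) a)"
    by (auto simp: step_D)
  have x: "snd z \<in> strategies n m" using z by (auto simp: states_def)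
  have "a \<in> profiles n m" using set_PiD[OF x] a by auto
  then show "w \<in> ZZ" using wa update_strat[OF x] by (auto simp: states_def)
qed

lemma step_nn:
  assumes z: "z \<in> ZZ"
  shows "(\<integral>\<^sup>+w. g w \<partial>measure_pmf (stp S z)) = (\<Sum>a\<in>profiles n m. ennreal (wt S (snd z) a) * g (a, upd (snd z) a))"
proof -
  have x: "snd z \<in> strategies n m" using z by (auto simp: states_def)
  have fin: "finite (profiles n m)" by (simp add: profiles_def finite_PiE)
  have "(\<integral>\<^sup>+w. g w \<partial>measure_pmf (stp S z)) = (\<integral>\<^sup>+a. g (a, upd (snd z) a) \<partial>measure_pmf (Pi_pmf {..<n} undefined (D S (snd z))))"
    by (simp add: step_D)
  also have "\<dots> = (\<Sum>a\<in>profiles n m. g (a, upd (snd z) a) * ennreal (pmf (Pi_pmf {..<n} undefined (D S (snd z))) a))"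
    by (rule nn_integral_measure_pmf_support[OF fin]) (use set_PiD[OF x] in auto)
  also have "\<dots> = (\<Sum>a\<in>profiles n m. ennreal (wt S (snd z) a) * g (a, upd (snd z) a))"
    by (intro sum.cong refl) (simp add: pmf_PiD[OF x] mult.commute)
  finally show ?thesis .
qed

lemma step_exp:
  fixes g :: "state \<Rightarrow> real"
  assumes z: "z \<in> ZZ"
  shows "kapply (stp S) g z = (\<Sum>a\<in>profiles n m. wt S (snd z) a * g (a, upd (snd z) a))"
proof -
  have x: "snd z \<in> strategies n m" using z by (auto simp: states_def)
  have fin: "finite (profiles n m)" by (simp add: profiles_def finite_PiE)
  have "kapply (stp S) g z = measure_pmf.expectation (Pi_pmf {..<n} undefined (D S (snd z))) (\<lambda>a. g (a, upd (snd z) a))"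
    by (simp add: kapply_def step_D)
  also have "\<dots> = (\<Sum>a\<in>profiles n m. pmf (Pi_pmf {..<n} undefined (D S (snd z))) a *\<^sub>R g (a, upd (snd z) a))"
    by (rule integral_measure_pmf[OF fin]) (use set_PiD[OF x] in auto)
  also have "\<dots> = (\<Sum>a\<in>profiles n m. wt S (snd z) a * g (a, upd (snd z) a))"
    by (intro sum.cong refl) (simp add: pmf_PiD[OF x])
  finally show ?thesis .
qed

lemma cont_coord: "continuous_on UNIV (\<lambda>z::state. snd z i k)"
proof -
  have "continuous_on UNIV (\<lambda>z::state. snd z)" by (rule continuous_on_snd[OF continuous_on_id])
  then have "continuous_on UNIV (\<lambda>z::state. snd z i)" by (rule continuous_on_product_then_coordinatewise)
  then show ?thesis by (rule continuous_on_product_then_coordinatewise)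
qed

lemma cont_wt: "continuous_on UNIV (\<lambda>z::state. wt S (snd z) a)"
  unfolding wt_def
proof (intro continuous_on_prod)
  fix i
  have "continuous_on UNIV (\<lambda>z::state. snd z i (a i))"
    by (rule cont_coord)
  then show "continuous_on UNIV (\<lambda>z::state. if i \<in> S then 1 / real (m i) else snd z i (a i))"
    by (cases "i \<in> S") auto
qed

lemma cont_upd: "continuous_on UNIV (\<lambda>z::state. (a, upd (snd z) a))"
proof -
  have "continuous_on UNIV (\<lambda>z::state. upd (snd z) a)"
  proof (rule continuous_on_coordinatewise_then_product)
    fix i
    show "continuous_on UNIV (\<lambda>z::state. upd (snd z) a i)"
    proof (cases "i < n")
      case True
      have "continuous_on UNIV (\<lambda>z::state. \<lambda>k. snd z i k + eps * u i a * (unitvec (a i) k - snd z i k))"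
      proof (rule continuous_on_coordinatewise_then_product)
        fix k
        have c: "continuous_on UNIV (\<lambda>z::state. snd z i k)"
          by (rule cont_coord)
        show "continuous_on UNIV (\<lambda>z::state. snd z i k + eps * u i a * (unitvec (a i) k - snd z i k))"
          by (intro continuous_on_add continuous_on_mult continuous_on_diff continuous_on_const c)
      qed
      then show ?thesis using True by (simp add: update_def)
    next
      case False then show ?thesis by (simp add: update_def)
    qed
  qed
  then show ?thesis by (rule continuous_on_Pair[OF continuous_on_const])
qed

lemma step_feller: "kfeller ZZ (stp S)"
  unfolding kfeller_def
proof safe
  fix f assume f: "Cb ZZ f"
  have "continuous_on ZZ (\<lambda>z. \<Sum>a\<in>profiles n m. wt S (snd z) a * f (a, upd (snd z) a))"
  proof (intro continuous_on_sum continuous_on_mult)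
    fix a assume a: "a \<in> profiles n m"
    show "continuous_on ZZ (\<lambda>z. wt S (snd z) a)" using cont_wt continuous_on_subset by blast
    show "continuous_on ZZ (\<lambda>z. f (a, upd (snd z) a))"
    proof (rule continuous_on_compose2[of ZZ f])
      show "continuous_on ZZ f" using f by (simp add: Cb_def)
      show "continuous_on ZZ (\<lambda>z::state. (a, upd (snd z) a))" using cont_upd continuous_on_subset by blast
      show "(\<lambda>z. (a, upd (snd z) a)) ` ZZ \<subseteq> ZZ"
        using a update_strat by (auto simp: states_def)
    qed
  qed
  then show "continuous_on ZZ (kapply (stp S) f)"
    by (rule continuous_on_cong[THEN iffD1, rotated 2]) (auto simp: step_exp)
qed

lemma step_meas: "kmeas ZZ (stp S)"
  unfolding kmeas_def
proof safe
  fix B assume B: "B \<in> sets (MZ ZZ)"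
  have "(\<lambda>z. \<Sum>a\<in>profiles n m. ennreal (wt S (snd z) a) * indicator B (a, upd (snd z) a)) \<in> borel_measurable (MZ ZZ)"
  proof (intro borel_measurable_sum borel_measurable_times_ennreal)
    fix a assume a: "a \<in> profiles n m"
    have "(\<lambda>z. wt S (snd z) a) \<in> borel_measurable (MZ ZZ)"
      using cont_wt continuous_on_subset borel_measurable_continuous_on_restrict by blast
    then show "(\<lambda>z. ennreal (wt S (snd z) a)) \<in> borel_measurable (MZ ZZ)" by simp
    have m1: "(\<lambda>z::state. (a, upd (snd z) a)) \<in> MZ ZZ \<rightarrow>\<^sub>M MZ ZZ"
    proof (rule measurable_restrict_space2)
      show "(\<lambda>z. (a, upd (snd z) a)) \<in> space (MZ ZZ) \<rightarrow> ZZ"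
        using a update_strat by (auto simp: states_def)
      show "(\<lambda>z::state. (a, upd (snd z) a)) \<in> MZ ZZ \<rightarrow>\<^sub>M borel"
        using cont_upd continuous_on_subset borel_measurable_continuous_on_restrict by blast
    qed
    have m2: "indicator B \<in> borel_measurable (MZ ZZ)" using B by simp
    show "(\<lambda>z. indicator B (a, upd (snd z) a) :: ennreal) \<in> borel_measurable (MZ ZZ)"
      using measurable_compose[OF m1 m2] by simp
  qed
  then show "(\<lambda>z. emeasure (measure_pmf (stp S z)) B) \<in> borel_measurable (MZ ZZ)"
    by (rule measurable_cong[THEN iffD1, rotated])
       (auto simp: step_nn nn_integral_indicator[symmetric] simp del: nn_integral_indicator)
qed

end


lemma bernoulli_0: "bernoulli_pmf 0 = return_pmf False"
  by (rule pmf_eqI) (case_tac i, auto)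

context game
begin

lemma n_ne[simp]: "{..<n} \<noteq> {}" "n \<noteq> 0" using n_pos by (auto simp: lessThan_empty_iff)

abbreviation "TT l \<equiv> tremble_pmf n l"
abbreviation "CC l \<equiv> cond_pmf (tremble_pmf n l) {S. S \<noteq> {}}"
abbreviation "Sg \<equiv> (\<lambda>k. {k}) ` {..<n}"

lemma Plam_eq:
  shows "Plam n m u eps l z = bind_pmf (TT l) (\<lambda>S. stp S z)"
proof -
  let ?F = "\<lambda>a. (a, upd (snd z) a)"
  let ?G = "\<lambda>i b. if b then pmf_of_set {..<m i} else strat_pmf (m i) (snd z i)"
  have "Plam n m u eps l z = map_pmf ?F (Pi_pmf {..<n} undefined (\<lambda>i. bind_pmf (bernoulli_pmf l) (?G i)))"
    by (simp add: Plam_def)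
  also have "Pi_pmf {..<n} undefined (\<lambda>i. bind_pmf (bernoulli_pmf l) (?G i)) =
     bind_pmf (Pi_pmf {..<n} False (\<lambda>_. bernoulli_pmf l)) (\<lambda>b. Pi_pmf {..<n} undefined (\<lambda>i. ?G i (b i)))"
    by (rule Pi_pmf_bind) simp
  also have "map_pmf ?F \<dots> = bind_pmf (Pi_pmf {..<n} False (\<lambda>_. bernoulli_pmf l)) (\<lambda>b. stp {i \<in> {..<n}. b i} z)"
    unfolding map_bind_pmf step_def by (intro bind_pmf_cong refl arg_cong[where f="map_pmf ?F"] Pi_pmf_cong) auto
  also have "\<dots> = bind_pmf (TT l) (\<lambda>S. stp S z)"
    by (simp add: tremble_pmf_def bind_map_pmf)
  finally show ?thesis .
qed

lemma TT0: "TT 0 = return_pmf {}"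
  by (simp add: tremble_pmf_def bernoulli_0 Pi_pmf_return_pmf)

lemma P0_eq: "Plam n m u eps 0 = stp {}"
  by (simp add: fun_eq_iff Plam_eq TT0 bind_return_pmf)

lemma set_TT: "set_pmf (TT l) \<subseteq> Pow {..<n}"
  by (auto simp: tremble_pmf_def)

lemma fin_TT: "finite (set_pmf (TT l))"
  using set_TT by (rule finite_subset) simp

lemma pmf_TT:
  assumes l: "0 \<le> l" "l \<le> 1" and S: "S \<subseteq> {..<n}"
  shows "pmf (TT l) S = l ^ card S * (1 - l) ^ (n - card S)"
proof -
  define M where "M = Pi_pmf {..<n} False (\<lambda>_. bernoulli_pmf l)"
  define f where "f = (\<lambda>b::nat \<Rightarrow> bool. {i \<in> {..<n}. b i})"
  define bS where "bS = (\<lambda>i. i \<in> S)"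
  have supp: "set_pmf M \<subseteq> {b. \<forall>x. x \<notin> {..<n} \<longrightarrow> b x = False}"
    unfolding M_def by (rule set_Pi_pmf_subset) simp
  have eq: "f -` {S} \<inter> set_pmf M = {bS} \<inter> set_pmf M"
  proof (intro equalityI subsetI)
    fix b assume b: "b \<in> f -` {S} \<inter> set_pmf M"
    then have "b = bS" using supp S by (auto simp: f_def bS_def fun_eq_iff)
    then show "b \<in> {bS} \<inter> set_pmf M" using b by auto
  next
    fix b assume b: "b \<in> {bS} \<inter> set_pmf M"
    then show "b \<in> f -` {S} \<inter> set_pmf M" using S by (auto simp: f_def bS_def)
  qed
  have "pmf (TT l) S = measure_pmf.prob M (f -` {S})"
    by (simp add: tremble_pmf_def pmf_map M_def f_def)
  also have "\<dots> = measure_pmf.prob M {bS}"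
    by (metis eq measure_Int_set_pmf)
  also have "\<dots> = pmf M bS" by (simp add: measure_pmf_single)
  also have "\<dots> = (\<Prod>i<n. pmf (bernoulli_pmf l) (bS i))"
    unfolding M_def using S by (intro pmf_Pi') (auto simp: bS_def)
  also have "\<dots> = (\<Prod>i<n. if i \<in> S then l else 1 - l)"
    using l by (intro prod.cong refl) (auto simp: bS_def)
  also have "\<dots> = l ^ card S * (1 - l) ^ (n - card S)"
  proof -
    have a: "{..<n} \<inter> S = S" using S by auto
    have fS: "finite S" using S finite_subset by blast
    have "{..<n} \<inter> - S = {..<n} - S" by auto
    then have b: "card ({..<n} \<inter> - S) = n - card S"
      using card_Diff_subset[OF fS S] by simp
    show ?thesis by (subst prod.If_cases) (simp_all add: a b)
  qed
  finally show ?thesis .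
qed

lemma phi_pos: "0 < l \<Longrightarrow> l \<le> 1 \<Longrightarrow> 0 < phi n l"
proof -
  assume l: "0 < l" "l \<le> 1"
  have "(1 - l) ^ n < 1"
    using l n_pos by (intro power_less_one_iff[THEN iffD2]) auto
  then show ?thesis by (simp add: phi_def)
qed

lemma phi_le1: "0 \<le> l \<Longrightarrow> l \<le> 1 \<Longrightarrow> phi n l \<le> 1"
  by (simp add: phi_def)

lemma phi_le: "0 \<le> l \<Longrightarrow> l \<le> 1 \<Longrightarrow> phi n l \<le> real n * l"
proof -
  assume l: "0 \<le> l" "l \<le> 1"
  have "1 + real n * (- l) \<le> (1 + - l) ^ n" by (rule Bernoulli_inequality) (use l in auto)
  then show ?thesis by (simp add: phi_def)
qed

lemma prob_nonempty:
  assumes l: "0 \<le> l" "l \<le> 1"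
  shows "measure_pmf.prob (TT l) {S. S \<noteq> {}} = phi n l"
proof -
  have "measure_pmf.prob (TT l) {S. S \<noteq> {}} = measure_pmf.prob (TT l) (space (measure_pmf (TT l)) - {{}})"
    by (intro arg_cong[where f="measure_pmf.prob (TT l)"]) auto
  also have "\<dots> = 1 - measure_pmf.prob (TT l) {{}}" by (rule measure_pmf.prob_compl) simp
  also have "\<dots> = phi n l" using pmf_TT[OF l, of "{}"] by (simp add: measure_pmf_single phi_def)
  finally show ?thesis .
qed

lemma cond_ok:
  assumes l: "0 < l" "l \<le> 1"
  shows "set_pmf (TT l) \<inter> {S. S \<noteq> {}} \<noteq> {}"
proof -
  have "pmf (TT l) {..<n} = l ^ n" using pmf_TT[of l "{..<n}"] l by simp
  then have "{..<n} \<in> set_pmf (TT l)" using l by (simp add: set_pmf_iff)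
  moreover have "{..<n} \<noteq> {}" using n_pos by auto
  ultimately show ?thesis by blast
qed

lemma pmf_CC:
  assumes l: "0 < l" "l \<le> 1"
  shows "pmf (CC l) S = (if S \<noteq> {} then pmf (TT l) S / phi n l else 0)"
  using pmf_cond[OF cond_ok[OF l], of S] prob_nonempty[of l] l by simp

lemma set_CC: "0 < l \<Longrightarrow> l \<le> 1 \<Longrightarrow> set_pmf (CC l) \<subseteq> set_pmf (TT l)"
  using set_cond_pmf[OF cond_ok] by auto

lemma fin_CC: "0 < l \<Longrightarrow> l \<le> 1 \<Longrightarrow> finite (set_pmf (CC l))"
  using set_CC fin_TT finite_subset by blast

lemma Qlam_eq: "Qlam n m u eps l = (\<lambda>z. bind_pmf (CC l) (\<lambda>S. stp S z))"
  by (simp add: fun_eq_iff Qlam_def)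

lemma Qone_eq: "Qone n m u eps = (\<lambda>z. bind_pmf (pmf_of_set Sg) (\<lambda>S. stp S z))"
  by (simp add: fun_eq_iff Qone_def)

lemma Plam_eq': "Plam n m u eps l = (\<lambda>z. bind_pmf (TT l) (\<lambda>S. stp S z))"
  by (simp add: fun_eq_iff Plam_eq)

lemma Rlam_eq: "Rlam n m u eps l = (\<lambda>z. bind_pmf (geometric_pmf (phi n l)) (\<lambda>t. kpow (stp {}) t z))"
  by (simp add: fun_eq_iff Rlam_def P0_eq)

lemma Sg_ne: "Sg \<noteq> {}" "finite Sg" using n_pos by auto

lemma P0_supp: "ksupp ZZ (stp {})" by (rule step_supp)
lemma P0_meas: "kmeas ZZ (stp {})" by (rule step_meas)

lemma Plam_supp: "ksupp ZZ (Plam n m u eps l)"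
  unfolding Plam_eq' by (rule mix_supp) (rule step_supp)

lemma Plam_meas: "kmeas ZZ (Plam n m u eps l)"
  unfolding Plam_eq' by (rule mix_meas_fin[OF fin_TT]) (rule step_meas)

lemma Qlam_supp: "ksupp ZZ (Qlam n m u eps l)"
  unfolding Qlam_eq by (rule mix_supp) (rule step_supp)

lemma Qlam_meas: "0 < l \<Longrightarrow> l \<le> 1 \<Longrightarrow> kmeas ZZ (Qlam n m u eps l)"
  unfolding Qlam_eq by (rule mix_meas_fin[OF fin_CC]) (auto intro: step_meas)

lemma Qone_supp: "ksupp ZZ (Qone n m u eps)"
  unfolding Qone_eq by (rule mix_supp) (rule step_supp)

lemma Qone_meas: "kmeas ZZ (Qone n m u eps)"
  unfolding Qone_eq by (rule mix_meas_fin) (auto simp: Sg_ne set_pmf_of_set intro: step_meas)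

lemma Rlam_supp: "ksupp ZZ (Rlam n m u eps l)"
  unfolding Rlam_eq by (rule mix_supp) (rule kpow_supp[OF step_supp])

lemma Rlam_meas: "kmeas ZZ (Rlam n m u eps l)"
  unfolding Rlam_eq by (rule mix_meas_nat) (rule kpow_meas[OF step_supp step_meas])

lemma PL_supp: "ksupp ZZ (PL n m u eps l)"
  unfolding PL_def by (rule kcomp_supp[OF Qlam_supp Rlam_supp])

lemma PL_meas: "0 < l \<Longrightarrow> l \<le> 1 \<Longrightarrow> kmeas ZZ (PL n m u eps l)"
  unfolding PL_def by (rule kcomp_meas[OF Qlam_supp Qlam_meas Rlam_meas])

lemma kapply_Qone:
  assumes z: "z \<in> ZZ" and g: "\<And>w. w \<in> ZZ \<Longrightarrow> \<bar>g w\<bar> \<le> C"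
  shows "kapply (Qone n m u eps) g z = (\<Sum>S\<in>Sg. kapply (stp S) g z) / real (card Sg)"
proof -
  have "kapply (Qone n m u eps) g z = measure_pmf.expectation (pmf_of_set Sg) (\<lambda>S. kapply (stp S) g z)"
    unfolding Qone_eq kapply_def
    by (rule exp_bind[where Z=ZZ and C=C]) (use step_supp z g in \<open>auto simp: ksupp_def\<close>)
  also have "\<dots> = (\<Sum>S\<in>Sg. kapply (stp S) g z) / real (card Sg)"
    by (rule integral_pmf_of_set) (use Sg_ne in auto)
  finally show ?thesis .
qed

lemma Qone_feller: "kfeller ZZ (Qone n m u eps)"
  unfolding kfeller_def
proof safe
  fix f assume f: "Cb ZZ f"
  obtain C where C: "\<forall>z\<in>ZZ. \<bar>f z\<bar> \<le> C" using Cb_bound[OF f] by blast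
  have "continuous_on ZZ (\<lambda>z. (\<Sum>S\<in>Sg. kapply (stp S) f z) / real (card Sg))"
    using step_feller f by (intro continuous_on_divide continuous_on_sum continuous_on_const) (auto simp: kfeller_def)
  then show "continuous_on ZZ (kapply (Qone n m u eps) f)"
    by (rule continuous_on_cong[THEN iffD1, rotated 2]) (use kapply_Qone[of _ f C] C in auto)
qed

end


context game
begin

lemma exp_TT: "measure_pmf.expectation (TT l) H = (\<Sum>S\<in>Pow {..<n}. pmf (TT l) S * H S)"
  by (subst integral_measure_pmf[of "Pow {..<n}"]) (use set_TT in auto)

lemma exp_CC: "0 < l \<Longrightarrow> l \<le> 1 \<Longrightarrow> measure_pmf.expectation (CC l) H = (\<Sum>S\<in>Pow {..<n}. pmf (CC l) S * H S)"
  by (subst integral_measure_pmf[of "Pow {..<n}"]) (use set_TT set_CC in auto)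

lemma sum_CC: "0 < l \<Longrightarrow> l \<le> 1 \<Longrightarrow> (\<Sum>S\<in>Pow {..<n}. pmf (CC l) S) = 1"
  using exp_CC[of l "\<lambda>_. 1"] by simp

lemma kapply_Plam_TT:
  assumes z: "z \<in> ZZ" and g: "\<And>w. w \<in> ZZ \<Longrightarrow> \<bar>g w\<bar> \<le> C"
  shows "kapply (Plam n m u eps l) g z = measure_pmf.expectation (TT l) (\<lambda>S. kapply (stp S) g z)"
  unfolding Plam_eq' kapply_def
  by (rule exp_bind[where Z=ZZ and C=C]) (use step_supp z g in \<open>auto simp: ksupp_def\<close>)

lemma kapply_Qlam_CC:
  assumes z: "z \<in> ZZ" and g: "\<And>w. w \<in> ZZ \<Longrightarrow> \<bar>g w\<bar> \<le> C"
  shows "kapply (Qlam n m u eps l) g z = measure_pmf.expectation (CC l) (\<lambda>S. kapply (stp S) g z)"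
  unfolding Qlam_eq kapply_def
  by (rule exp_bind[where Z=ZZ and C=C]) (use step_supp z g in \<open>auto simp: ksupp_def\<close>)

lemma kapply_Qone_U:
  assumes z: "z \<in> ZZ" and g: "\<And>w. w \<in> ZZ \<Longrightarrow> \<bar>g w\<bar> \<le> C"
  shows "kapply (Qone n m u eps) g z = measure_pmf.expectation (pmf_of_set Sg) (\<lambda>S. kapply (stp S) g z)"
  unfolding Qone_eq kapply_def
  by (rule exp_bind[where Z=ZZ and C=C]) (use step_supp z g in \<open>auto simp: ksupp_def\<close>)

lemma TT_CC_decomp:
  assumes l: "0 < l" "l \<le> 1"
  shows "measure_pmf.expectation (TT l) H = (1 - phi n l) * H {} + phi n l * measure_pmf.expectation (CC l) H"
proof -
  have ph: "phi n l \<noteq> 0" using phi_pos[OF l] by simp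
  have fin: "finite (Pow {..<n::nat})" by simp
  have e: "{} \<in> Pow {..<n}" by simp
  have "measure_pmf.expectation (TT l) H = pmf (TT l) {} * H {} + (\<Sum>S\<in>Pow {..<n} - {{}}. pmf (TT l) S * H S)"
    unfolding exp_TT by (subst sum.remove[OF fin e]) simp
  also have "pmf (TT l) {} = 1 - phi n l" using pmf_TT[of l "{}"] l by (simp add: phi_def)
  also have "(\<Sum>S\<in>Pow {..<n} - {{}}. pmf (TT l) S * H S) = phi n l * measure_pmf.expectation (CC l) H"
  proof -
    have "phi n l * measure_pmf.expectation (CC l) H = phi n l * (pmf (CC l) {} * H {} + (\<Sum>S\<in>Pow {..<n} - {{}}. pmf (CC l) S * H S))"
      unfolding exp_CC[OF l] by (subst sum.remove[OF fin e]) simp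
    also have "\<dots> = (\<Sum>S\<in>Pow {..<n} - {{}}. phi n l * (pmf (CC l) S * H S))"
      using pmf_CC[OF l] by (simp add: sum_distrib_left)
    also have "\<dots> = (\<Sum>S\<in>Pow {..<n} - {{}}. pmf (TT l) S * H S)"
      using ph by (intro sum.cong refl) (auto simp: pmf_CC[OF l])
    finally show ?thesis by simp
  qed
  finally show ?thesis .
qed

lemma kapply_Plam_decomp:
  assumes l: "0 < l" "l \<le> 1" and z: "z \<in> ZZ" and g: "\<And>w. w \<in> ZZ \<Longrightarrow> \<bar>g w\<bar> \<le> C"
  shows "kapply (Plam n m u eps l) g z =
    (1 - phi n l) * kapply (stp {}) g z + phi n l * kapply (Qlam n m u eps l) g z"
  using kapply_Plam_TT[OF z g] kapply_Qlam_CC[OF z g] TT_CC_decomp[OF l] by simp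

lemma pmf_CC_single:
  assumes l: "0 < l" "l \<le> 1" and k: "k < n"
  shows "pmf (CC l) {k} = l * (1 - l) ^ (n - 1) / phi n l"
  using pmf_CC[OF l, of "{k}"] pmf_TT[of l "{k}"] l k by simp

lemma cond_vs_unif:
  assumes l: "0 < l" "l \<le> 1" and H: "\<And>S. \<bar>H S\<bar> \<le> C"
  shows "\<bar>measure_pmf.expectation (CC l) H - measure_pmf.expectation (pmf_of_set Sg) H\<bar>
          \<le> 2 * C * ((real n - 1) * l)"
proof -
  define c1 where "c1 = l * (1 - l) ^ (n - 1) / phi n l"
  have C0: "0 \<le> C" using H[of "{}"] by linarith
  have inj: "inj_on (\<lambda>k::nat. {k}) {..<n}" by (auto simp: inj_on_def)
  have cSg: "card Sg = n" using card_image[OF inj] by simp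
  have SgP: "Sg \<subseteq> Pow {..<n}" by auto
  have fin: "finite (Pow {..<n::nat})" by simp
  have pc1: "\<And>S. S \<in> Sg \<Longrightarrow> pmf (CC l) S = c1" using pmf_CC_single[OF l] by (auto simp: c1_def)
  have sumSg: "(\<Sum>S\<in>Sg. pmf (CC l) S) = n * c1" using pc1 cSg by simp
  have split: "(\<Sum>S\<in>Pow {..<n}. f S) = (\<Sum>S\<in>Pow {..<n} - Sg. f S) + (\<Sum>S\<in>Sg. f S)" for f :: "nat set \<Rightarrow> real"
    by (rule sum.subset_diff[OF SgP fin])
  have rest: "(\<Sum>S\<in>Pow {..<n} - Sg. pmf (CC l) S) = 1 - n * c1"
    using split[of "pmf (CC l)"] sum_CC[OF l] sumSg by simp
  have nc1_le: "n * c1 \<le> 1"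
    using rest sum_nonneg[of "Pow {..<n} - Sg" "pmf (CC l)"] by auto
  have EC: "measure_pmf.expectation (CC l) H = (\<Sum>S\<in>Pow {..<n} - Sg. pmf (CC l) S * H S) + (\<Sum>S\<in>Sg. c1 * H S)"
    unfolding exp_CC[OF l] split using pc1 by simp
  have EU: "measure_pmf.expectation (pmf_of_set Sg) H = (\<Sum>S\<in>Sg. (1 / n) * H S)"
    by (subst integral_pmf_of_set) (use Sg_ne cSg in \<open>auto simp: sum_divide_distrib\<close>)
  have b1: "\<bar>\<Sum>S\<in>Pow {..<n} - Sg. pmf (CC l) S * H S\<bar> \<le> C * (1 - n * c1)"
  proof -
    have "\<bar>\<Sum>S\<in>Pow {..<n} - Sg. pmf (CC l) S * H S\<bar> \<le> (\<Sum>S\<in>Pow {..<n} - Sg. \<bar>pmf (CC l) S * H S\<bar>)"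
      by (rule sum_abs)
    also have "\<dots> \<le> (\<Sum>S\<in>Pow {..<n} - Sg. pmf (CC l) S * C)"
      using H by (intro sum_mono) (auto simp: abs_mult intro: mult_left_mono)
    also have "\<dots> = C * (1 - n * c1)" using rest by (simp add: sum_distrib_left[symmetric] mult.commute)
    finally show ?thesis .
  qed
  have b2: "\<bar>\<Sum>S\<in>Sg. (c1 - 1 / n) * H S\<bar> \<le> C * (1 - n * c1)"
  proof -
    have "\<bar>\<Sum>S\<in>Sg. (c1 - 1 / n) * H S\<bar> \<le> (\<Sum>S\<in>Sg. \<bar>(c1 - 1 / n) * H S\<bar>)" by (rule sum_abs)
    also have "\<dots> \<le> (\<Sum>S\<in>Sg. \<bar>c1 - 1 / n\<bar> * C)"
      using H by (intro sum_mono) (auto simp: abs_mult intro: mult_left_mono)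
    also have "\<dots> = n * \<bar>c1 - 1 / n\<bar> * C" using cSg by simp
    also have "n * \<bar>c1 - 1 / n\<bar> = 1 - n * c1"
    proof -
      have e1: "real n * (c1 - 1 / n) = n * c1 - 1" by (simp add: right_diff_distrib)
      have "real n * \<bar>c1 - 1 / n\<bar> = \<bar>real n * (c1 - 1 / n)\<bar>" by (simp add: abs_mult)
      then have "n * \<bar>c1 - 1 / n\<bar> = \<bar>n * c1 - 1\<bar>" using e1 by simp
      then show ?thesis using nc1_le by simp
    qed
    finally show ?thesis by (simp add: mult.commute)
  qed
  have diff: "measure_pmf.expectation (CC l) H - measure_pmf.expectation (pmf_of_set Sg) H =
      (\<Sum>S\<in>Pow {..<n} - Sg. pmf (CC l) S * H S) + (\<Sum>S\<in>Sg. (c1 - 1 / n) * H S)"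
    unfolding EC EU by (simp add: sum_subtractf left_diff_distrib)
  have main: "\<bar>measure_pmf.expectation (CC l) H - measure_pmf.expectation (pmf_of_set Sg) H\<bar> \<le> 2 * C * (1 - n * c1)"
    unfolding diff using b1 b2 abs_triangle_ineq[of "\<Sum>S\<in>Pow {..<n} - Sg. pmf (CC l) S * H S" "\<Sum>S\<in>Sg. (c1 - 1 / n) * H S"]
    by linarith
  have ph: "0 < phi n l" "phi n l \<le> n * l" using phi_pos[OF l] phi_le[of l] l by auto
  have B: "1 + real (n - 1) * (- l) \<le> (1 + - l) ^ (n - 1)" by (rule Bernoulli_inequality) (use l in auto)
  have q0: "0 \<le> (1 - l) ^ (n - 1)" using l by simp
  have "(1 - l) ^ (n - 1) \<le> n * c1"
  proof -
    have "(1 - l) ^ (n - 1) * phi n l \<le> (1 - l) ^ (n - 1) * (n * l)"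
      by (rule mult_left_mono[OF ph(2) q0])
    then show ?thesis using ph(1) by (simp add: c1_def field_simps)
  qed
  moreover have "real (n - 1) = real n - 1" using n_pos by (simp add: of_nat_diff)
  ultimately have "1 - n * c1 \<le> (real n - 1) * l" using B by (simp add: algebra_simps)
  then have "2 * C * (1 - n * c1) \<le> 2 * C * ((real n - 1) * l)"
    using C0 by (intro mult_left_mono) auto
  with main show ?thesis by linarith
qed

end

lemma supnorm_le:
  assumes "Z \<noteq> {}" "\<And>z. z \<in> Z \<Longrightarrow> \<bar>g z\<bar> \<le> c"
  shows "supnorm Z g \<le> c"
  unfolding supnorm_def using assms by (intro cSUP_least) auto

lemma supnorm_ge:
  assumes "\<And>z. z \<in> Z \<Longrightarrow> \<bar>g z\<bar> \<le> c" "z \<in> Z"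
  shows "\<bar>g z\<bar> \<le> supnorm Z g"
  unfolding supnorm_def using assms by (intro cSUP_upper) (auto intro!: bdd_aboveI2)

lemma supnorm_nonneg:
  assumes "\<And>z. z \<in> Z \<Longrightarrow> \<bar>g z\<bar> \<le> c" "z \<in> Z"
  shows "0 \<le> supnorm Z g"
  using supnorm_ge[of Z g c z] assms by fastforce


lemma geo_bound:
  fixes h :: "nat \<Rightarrow> real"
  assumes p: "0 < p" "p \<le> 1" and hB: "\<And>t. \<bar>h t\<bar> \<le> B" and hT: "\<And>t. t \<ge> T \<Longrightarrow> \<bar>h t\<bar> \<le> e" and e: "0 \<le> e"
  shows "\<bar>measure_pmf.expectation (geometric_pmf p) h\<bar> \<le> e + B * T * p"
proof -
  have B0: "0 \<le> B" using hB[of 0] by linarith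
  have int: "integrable (measure_pmf (geometric_pmf p)) h"
    by (rule measure_pmf.integrable_const_bound[where B=B]) (use hB in auto)
  have int2: "integrable (measure_pmf (geometric_pmf p)) (\<lambda>t. e + B * indicator {..<T} t)"
    by (rule measure_pmf.integrable_const_bound[where B="\<bar>e\<bar> + \<bar>B\<bar>"]) (auto simp: indicator_def)
  have "\<bar>measure_pmf.expectation (geometric_pmf p) h\<bar> \<le> measure_pmf.expectation (geometric_pmf p) (\<lambda>t. \<bar>h t\<bar>)"
    by (rule integral_abs_bound)
  also have "\<dots> \<le> measure_pmf.expectation (geometric_pmf p) (\<lambda>t. e + B * indicator {..<T} t)"
  proof (rule integral_mono)
    show "integrable (measure_pmf (geometric_pmf p)) (\<lambda>t. \<bar>h t\<bar>)" using int by simp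
    show "integrable (measure_pmf (geometric_pmf p)) (\<lambda>t. e + B * indicator {..<T} t)" by (rule int2)
    fix t show "\<bar>h t\<bar> \<le> e + B * indicator {..<T} t"
      using hB[of t] hT[of t] e by (cases "t < T") (auto simp: indicator_def)
  qed
  also have "\<dots> = e + B * measure_pmf.prob (geometric_pmf p) {..<T}"
    by (subst Bochner_Integration.integral_add) (auto simp: integral_indicator measure_pmf.emeasure_eq_measure)
  also have "measure_pmf.prob (geometric_pmf p) {..<T} = (\<Sum>t<T. (1 - p) ^ t * p)"
    using p by (simp add: measure_measure_pmf_finite)
  also have "\<dots> \<le> (\<Sum>t<T. p)"
    using p by (intro sum_mono) (auto intro!: mult_left_le_one_le power_le_one)
  also have "\<dots> = T * p" by simp
  finally show ?thesis using B0 by (simp add: mult_left_mono mult.assoc)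
qed

locale gameP = game +
  fixes PiK :: "state \<Rightarrow> state pmf"
  assumes Pi_lim: "\<forall>f. Cb (states n m) f \<longrightarrow>
        (\<lambda>t. supnorm (states n m)
               (\<lambda>z. kapply (kpow (Plam n m u eps 0) t) f z - kapply PiK f z)) \<longlonglongrightarrow> 0"
    and Pi_supp: "\<forall>z\<in>states n m. set_pmf (PiK z) \<subseteq> pure_states n m"
begin

lemma ZZ_ne: "ZZ \<noteq> {}"
proof -
  define a where "a = (\<lambda>i\<in>{..<n}. 0::nat)"
  define x where "x = (\<lambda>i\<in>{..<n}. unitvec 0)"
  have "a \<in> profiles n m" using acts by (auto simp: a_def profiles_def)
  moreover have "x \<in> strategies n m"
    using acts by (auto simp: x_def strategies_def strat_simplex_def unitvec_def)
  ultimately have "(a, x) \<in> ZZ" by (simp add: states_def)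
  then show ?thesis by blast
qed

lemma PiK_supp: "ksupp ZZ PiK"
  using Pi_supp by (auto simp: ksupp_def pure_states_def)

lemma kapply_bound:
  assumes "ksupp ZZ K" "z \<in> ZZ" "\<And>w. w \<in> ZZ \<Longrightarrow> \<bar>f w\<bar> \<le> C"
  shows "\<bar>kapply K f z\<bar> \<le> C"
  unfolding kapply_def by (rule exp_bound[where Z=ZZ]) (use assms in \<open>auto simp: ksupp_def\<close>)

lemma Pi_unif:
  assumes f: "Cb ZZ f" and e: "e > 0"
  shows "\<exists>T. \<forall>t\<ge>T. \<forall>z\<in>ZZ. \<bar>kapply (kpow (stp {}) t) f z - kapply PiK f z\<bar> \<le> e"
proof -
  obtain C where C: "\<And>z. z \<in> ZZ \<Longrightarrow> \<bar>f z\<bar> \<le> C" using Cb_bound[OF f] by blast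
  have lim: "(\<lambda>t. supnorm ZZ (\<lambda>z. kapply (kpow (stp {}) t) f z - kapply PiK f z)) \<longlonglongrightarrow> 0"
    using Pi_lim f by (simp add: P0_eq)
  then obtain T where T: "\<And>t. t \<ge> T \<Longrightarrow> \<bar>supnorm ZZ (\<lambda>z. kapply (kpow (stp {}) t) f z - kapply PiK f z)\<bar> < e"
    using e by (auto simp: LIMSEQ_def dist_real_def)
  have bd: "\<bar>kapply (kpow (stp {}) t) f z - kapply PiK f z\<bar> \<le> 2 * C" if "z \<in> ZZ" for t z
  proof -
    have "\<bar>kapply (kpow (stp {}) t) f z\<bar> \<le> C" by (rule kapply_bound[OF kpow_supp[OF step_supp[of "{}"], of t] that]) (rule C)
    moreover have "\<bar>kapply PiK f z\<bar> \<le> C" by (rule kapply_bound[OF PiK_supp that]) (rule C)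
    ultimately show ?thesis by linarith
  qed
  show ?thesis
  proof (intro exI allI impI ballI)
    fix t z assume t: "T \<le> t" and z: "z \<in> ZZ"
    have "\<bar>kapply (kpow (stp {}) t) f z - kapply PiK f z\<bar> \<le> supnorm ZZ (\<lambda>z. kapply (kpow (stp {}) t) f z - kapply PiK f z)"
      by (rule supnorm_ge[OF bd z])
    then show "\<bar>kapply (kpow (stp {}) t) f z - kapply PiK f z\<bar> \<le> e" using T[OF t] by linarith
  qed
qed

lemma PiK_feller: "kfeller ZZ PiK"
  unfolding kfeller_def
proof safe
  fix f assume f: "Cb ZZ f"
  have "uniform_limit ZZ (\<lambda>t. kapply (kpow (stp {}) t) f) (kapply PiK f) sequentially"
    unfolding uniform_limit_iff
  proof safe
    fix e :: real assume e: "e > 0"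
    obtain T where T: "\<forall>t\<ge>T. \<forall>z\<in>ZZ. \<bar>kapply (kpow (stp {}) t) f z - kapply PiK f z\<bar> \<le> e / 2"
      using Pi_unif[OF f, of "e/2"] e by auto
    show "\<forall>\<^sub>F t in sequentially. \<forall>z\<in>ZZ. dist (kapply (kpow (stp {}) t) f z) (kapply PiK f z) < e"
      using T e unfolding eventually_sequentially dist_real_def by fastforce
  qed
  moreover have "\<forall>\<^sub>F t in sequentially. continuous_on ZZ (kapply (kpow (stp {}) t) f)"
    using kpow_feller[OF step_supp step_feller] f by (auto simp: kfeller_def)
  ultimately show "continuous_on ZZ (kapply PiK f)"
    by (intro uniform_limit_theorem) auto
qed

lemma part_a:
  assumes f: "Cb ZZ f"
  shows "((\<lambda>l. supnorm ZZ (\<lambda>z. kapply (Rlam n m u eps l) f z - kapply PiK f z)) \<longlongrightarrow> 0) (at_right 0)"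
proof -
  obtain C where C: "\<And>z. z \<in> ZZ \<Longrightarrow> \<bar>f z\<bar> \<le> C" using Cb_bound[OF f] by blast
  obtain z0 where z0: "z0 \<in> ZZ" using ZZ_ne by blast
  have C0: "0 \<le> C" using C[OF z0] by linarith
  have key: "\<bar>kapply (Rlam n m u eps l) f z - kapply PiK f z\<bar> \<le> e + 2 * C * T * phi n l"
    if l: "0 < l" "l \<le> 1" and z: "z \<in> ZZ" and e: "0 \<le> e"
      and T: "\<forall>t\<ge>T. \<forall>z\<in>ZZ. \<bar>kapply (kpow (stp {}) t) f z - kapply PiK f z\<bar> \<le> e" for l z e T
  proof -
    let ?g = "geometric_pmf (phi n l)"
    have p: "0 < phi n l" "phi n l \<le> 1" using phi_pos[OF l] phi_le1[of l] l by auto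
    have b1: "\<bar>kapply (kpow (stp {}) t) f z\<bar> \<le> C" for t
      by (rule kapply_bound[OF kpow_supp[OF step_supp] z C])
    have b2: "\<bar>kapply PiK f z\<bar> \<le> C" by (rule kapply_bound[OF PiK_supp z C])
    have R: "kapply (Rlam n m u eps l) f z = measure_pmf.expectation ?g (\<lambda>t. kapply (kpow (stp {}) t) f z)"
      unfolding Rlam_eq kapply_def
      by (rule exp_bind[where Z=ZZ and C=C]) (use kpow_supp[OF step_supp] z C in \<open>auto simp: ksupp_def\<close>)
    have int: "integrable (measure_pmf ?g) (\<lambda>t. kapply (kpow (stp {}) t) f z)"
      by (rule measure_pmf.integrable_const_bound[where B=C]) (use b1 in auto)
    have "kapply (Rlam n m u eps l) f z - kapply PiK f z =
          measure_pmf.expectation ?g (\<lambda>t. kapply (kpow (stp {}) t) f z - kapply PiK f z)"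
      unfolding R by (subst Bochner_Integration.integral_diff[OF int]) auto
    also have "\<bar>\<dots>\<bar> \<le> e + 2 * C * T * phi n l"
    proof (rule geo_bound[OF p])
      fix t show "\<bar>kapply (kpow (stp {}) t) f z - kapply PiK f z\<bar> \<le> 2 * C" using b1[of t] b2 by linarith
    next
      fix t assume "T \<le> t" then show "\<bar>kapply (kpow (stp {}) t) f z - kapply PiK f z\<bar> \<le> e" using T z by auto
    qed (rule e)
    finally show ?thesis .
  qed
  show ?thesis
    unfolding tendsto_iff
  proof safe
    fix e :: real assume e: "e > 0"
    obtain T where T: "\<forall>t\<ge>T. \<forall>z\<in>ZZ. \<bar>kapply (kpow (stp {}) t) f z - kapply PiK f z\<bar> \<le> e / 4"
      using Pi_unif[OF f, of "e/4"] e by auto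
    define K where "K = 2 * C * T * n + 1"
    have "0 \<le> 2 * C * T * n" using C0 by (intro mult_nonneg_nonneg) auto
    then have K: "K > 0" by (simp add: K_def)
    define d where "d = min 1 (e / (4 * K))"
    have d: "d > 0" using K e by (simp add: d_def)
    show "\<forall>\<^sub>F l in at_right 0. dist (supnorm ZZ (\<lambda>z. kapply (Rlam n m u eps l) f z - kapply PiK f z)) 0 < e"
      unfolding eventually_at_right_field
    proof (intro exI[of _ d] conjI allI impI)
      show "0 < d" by (rule d)
      fix l :: real assume l0: "0 < l" and ld: "l < d"
      have l: "0 < l" "l \<le> 1" using l0 ld by (auto simp: d_def)
      have lK: "K * l \<le> e / 4" using ld K e by (simp add: d_def field_simps)
      have "2 * C * T * phi n l \<le> 2 * C * T * (n * l)"
        using phi_le[of l] l C0 by (intro mult_left_mono) auto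
      also have "\<dots> \<le> K * l" using l by (simp add: K_def algebra_simps)
      finally have ph: "2 * C * T * phi n l \<le> e / 4" using lK by linarith
      have bz: "\<bar>kapply (Rlam n m u eps l) f z - kapply PiK f z\<bar> \<le> e / 2" if z: "z \<in> ZZ" for z
        using key[OF l z _ T] e ph by linarith
      have "supnorm ZZ (\<lambda>z. kapply (Rlam n m u eps l) f z - kapply PiK f z) \<le> e / 2"
        by (rule supnorm_le[OF ZZ_ne bz])
      moreover have "0 \<le> supnorm ZZ (\<lambda>z. kapply (Rlam n m u eps l) f z - kapply PiK f z)"
        by (rule supnorm_nonneg[OF bz z0])
      ultimately show "dist (supnorm ZZ (\<lambda>z. kapply (Rlam n m u eps l) f z - kapply PiK f z)) 0 < e"
        using e by (simp add: dist_real_def)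
    qed
  qed
qed

end


lemma measure_bind_exp:
  "measure_pmf.prob (bind_pmf p K) B = measure_pmf.expectation p (\<lambda>w. measure_pmf.prob (K w) B)"
proof -
  have int: "integrable (measure_pmf p) (\<lambda>w. measure_pmf.prob (K w) B)"
    by (rule measure_pmf.integrable_const_bound[where B=1]) auto
  have "emeasure (measure_pmf (bind_pmf p K)) B = (\<integral>\<^sup>+w. ennreal (measure_pmf.prob (K w) B) \<partial>measure_pmf p)"
    by (subst emeasure_bind_pmf') (simp add: measure_pmf.emeasure_eq_measure)
  also have "\<dots> = ennreal (measure_pmf.expectation p (\<lambda>w. measure_pmf.prob (K w) B))"
    by (rule nn_integral_eq_integral[OF int]) auto
  finally show ?thesis
    by (simp add: measure_pmf.emeasure_eq_measure)
qed

context gameP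
begin

lemma part_b:
  assumes f: "Cb ZZ f"
  shows "((\<lambda>l. supnorm ZZ (\<lambda>z. kapply (PL n m u eps l) f z - kapply (kcomp (Qone n m u eps) PiK) f z)) \<longlongrightarrow> 0) (at_right 0)"
proof -
  obtain C where C: "\<And>z. z \<in> ZZ \<Longrightarrow> \<bar>f z\<bar> \<le> C" using Cb_bound[OF f] by blast
  obtain z0 where z0: "z0 \<in> ZZ" using ZZ_ne by blast
  have C0: "0 \<le> C" using C[OF z0] by linarith
  define s where "s l = supnorm ZZ (\<lambda>w. kapply (Rlam n m u eps l) f w - kapply PiK f w)" for l
  have rb: "\<bar>kapply (Rlam n m u eps l) f w\<bar> \<le> C" if "w \<in> ZZ" for l w
    by (rule kapply_bound[OF Rlam_supp that]) (rule C)
  have gb: "\<bar>kapply PiK f w\<bar> \<le> C" if "w \<in> ZZ" for w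
    by (rule kapply_bound[OF PiK_supp that]) (rule C)
  have dif: "\<bar>kapply (Rlam n m u eps l) f w - kapply PiK f w\<bar> \<le> 2 * C" if "w \<in> ZZ" for l w
    using rb[OF that, of l] gb[OF that] by linarith
  have key: "\<bar>kapply (PL n m u eps l) f z - kapply (kcomp (Qone n m u eps) PiK) f z\<bar> \<le> s l + 2 * C * ((real n - 1) * l)"
    if l: "0 < l" "l \<le> 1" and z: "z \<in> ZZ" for l z
  proof -
    let ?r = "kapply (Rlam n m u eps l) f" and ?g = "kapply PiK f"
    have e1: "kapply (PL n m u eps l) f z = kapply (Qlam n m u eps l) ?r z"
      unfolding PL_def by (rule kapply_kcomp[OF Qlam_supp Rlam_supp z]) (rule C)
    have e2: "kapply (kcomp (Qone n m u eps) PiK) f z = kapply (Qone n m u eps) ?g z"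
      by (rule kapply_kcomp[OF Qone_supp PiK_supp z]) (rule C)
    have sQ: "set_pmf (Qlam n m u eps l z) \<subseteq> ZZ" using Qlam_supp z by (auto simp: ksupp_def)
    have e3: "kapply (Qlam n m u eps l) ?r z - kapply (Qlam n m u eps l) ?g z =
              kapply (Qlam n m u eps l) (\<lambda>w. ?r w - ?g w) z"
    proof -
      have i1: "integrable (measure_pmf (Qlam n m u eps l z)) ?r" by (rule exp_int[OF sQ]) (rule rb)
      have i2: "integrable (measure_pmf (Qlam n m u eps l z)) ?g" by (rule exp_int[OF sQ]) (rule gb)
      show ?thesis unfolding kapply_def[of "Qlam n m u eps l"]
        by (rule Bochner_Integration.integral_diff[OF i1 i2, symmetric])
    qed
    have b3: "\<bar>kapply (Qlam n m u eps l) (\<lambda>w. ?r w - ?g w) z\<bar> \<le> s l"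
      unfolding s_def by (rule kapply_bound[OF Qlam_supp z]) (rule supnorm_ge[OF dif])
    have b4: "\<bar>kapply (Qlam n m u eps l) ?g z - kapply (Qone n m u eps) ?g z\<bar> \<le> 2 * C * ((real n - 1) * l)"
    proof -
      have "kapply (Qlam n m u eps l) ?g z - kapply (Qone n m u eps) ?g z =
            measure_pmf.expectation (CC l) (\<lambda>S. kapply (stp S) ?g z) - measure_pmf.expectation (pmf_of_set Sg) (\<lambda>S. kapply (stp S) ?g z)"
        using kapply_Qlam_CC[OF z gb] kapply_Qone_U[OF z gb] by simp
      also have "\<bar>\<dots>\<bar> \<le> 2 * C * ((real n - 1) * l)"
        by (rule cond_vs_unif[OF l]) (rule kapply_bound[OF step_supp z gb])
      finally show ?thesis .
    qed
    show ?thesis using e1 e2 e3 b3 b4 by linarith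
  qed
  have sa: "(s \<longlongrightarrow> 0) (at_right 0)" unfolding s_def by (rule part_a[OF f])
  show ?thesis
    unfolding tendsto_iff
  proof safe
    fix e :: real assume e: "e > 0"
    have ev1: "\<forall>\<^sub>F l in at_right 0. dist (s l) 0 < e / 2" using sa e unfolding tendsto_iff by (meson half_gt_zero)
    define K where "K = 2 * C * (real n - 1) + 1"
    have "0 \<le> 2 * C * (real n - 1)" using C0 n_pos by (intro mult_nonneg_nonneg) auto
    then have K: "K > 0" by (simp add: K_def)
    define d where "d = min 1 (e / (4 * K))"
    have d: "d > 0" using K e by (simp add: d_def)
    have ev2: "\<forall>\<^sub>F l in at_right 0. 0 < l \<and> l < d"
      unfolding eventually_at_right_field by (intro exI[of _ d]) (use d in auto)
    show "\<forall>\<^sub>F l in at_right 0. dist (supnorm ZZ (\<lambda>z. kapply (PL n m u eps l) f z - kapply (kcomp (Qone n m u eps) PiK) f z)) 0 < e"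
      using eventually_conj[OF ev1 ev2]
    proof (rule eventually_mono)
      fix l assume H: "dist (s l) 0 < e / 2 \<and> 0 < l \<and> l < d"
      have l: "0 < l" "l \<le> 1" using H by (auto simp: d_def)
      have lK: "K * l \<le> e / 4" using H K e by (simp add: d_def field_simps)
      have "2 * C * ((real n - 1) * l) \<le> K * l" using l by (simp add: K_def algebra_simps)
      then have t2: "2 * C * ((real n - 1) * l) \<le> e / 4" using lK by linarith
      have t1: "s l < e / 2" using H by (auto simp: dist_real_def)
      have bz: "\<bar>kapply (PL n m u eps l) f z - kapply (kcomp (Qone n m u eps) PiK) f z\<bar> \<le> 3 * e / 4" if z: "z \<in> ZZ" for z
        using key[OF l z] t1 t2 by linarith
      have "supnorm ZZ (\<lambda>z. kapply (PL n m u eps l) f z - kapply (kcomp (Qone n m u eps) PiK) f z) \<le> 3 * e / 4"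
        by (rule supnorm_le[OF ZZ_ne bz])
      moreover have "0 \<le> supnorm ZZ (\<lambda>z. kapply (PL n m u eps l) f z - kapply (kcomp (Qone n m u eps) PiK) f z)"
        by (rule supnorm_nonneg[OF bz z0])
      ultimately show "dist (supnorm ZZ (\<lambda>z. kapply (PL n m u eps l) f z - kapply (kcomp (Qone n m u eps) PiK) f z)) 0 < e"
        using e by (simp add: dist_real_def)
    qed
  qed
qed

end


context gameP
begin

lemma part_c:
  assumes l: "0 < l" "l \<le> 1" and I: "ipm ZZ (Plam n m u eps l) M"
  shows "ipm ZZ (PL n m u eps l) M"
proof -
  have Mp: "M \<in> prob_measures ZZ" using I by (simp add: ipm_def)
  have sM: "sets M = sets (MZ ZZ)" and pM: "prob_space M" using Mp by (auto simp: prob_measures_def)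
  interpret prob_space M by (rule pM)
  have spM: "space M = ZZ" using sets_eq_imp_space_eq[OF sM] by simp
  have meq: "borel_measurable M = borel_measurable (MZ ZZ)" by (rule measurable_cong_sets[OF sM refl])
  define ph where "ph = phi n l"
  have ph: "0 < ph" "ph \<le> 1" using phi_pos[OF l] phi_le1[of l] l by (auto simp: ph_def)
  show ?thesis unfolding ipm_def
  proof (intro conjI ballI)
    show "M \<in> prob_measures ZZ" by (rule Mp)
    fix B assume B: "B \<in> sets M"
    have BZ: "B \<in> sets (MZ ZZ)" using B sM by simp
    define h where "h = (\<lambda>t z. measure_pmf.prob (kpow (stp {}) t z) B)"
    define q where "q = (\<lambda>t z. measure_pmf.prob (kcomp (Qlam n m u eps l) (kpow (stp {}) t) z) B)"
    have hm: "h t \<in> borel_measurable (MZ ZZ)" for t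
    proof -
      have "(\<lambda>z. emeasure (measure_pmf (kpow (stp {}) t z)) B) \<in> borel_measurable (MZ ZZ)"
        using kpow_meas[OF step_supp step_meas] BZ by (auto simp: kmeas_def)
      then have "(\<lambda>z. enn2real (emeasure (measure_pmf (kpow (stp {}) t z)) B)) \<in> borel_measurable (MZ ZZ)"
        by (rule borel_measurable_enn2real)
      then show ?thesis by (simp add: h_def measure_pmf.emeasure_eq_measure)
    qed
    have qm: "q t \<in> borel_measurable (MZ ZZ)" for t
    proof -
      have "(\<lambda>z. emeasure (measure_pmf (kcomp (Qlam n m u eps l) (kpow (stp {}) t) z)) B) \<in> borel_measurable (MZ ZZ)"
        using kcomp_meas[OF Qlam_supp Qlam_meas[OF l] kpow_meas[OF step_supp step_meas]] BZ by (auto simp: kmeas_def)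
      then have "(\<lambda>z. enn2real (emeasure (measure_pmf (kcomp (Qlam n m u eps l) (kpow (stp {}) t) z)) B)) \<in> borel_measurable (MZ ZZ)"
        by (rule borel_measurable_enn2real)
      then show ?thesis by (simp add: q_def measure_pmf.emeasure_eq_measure)
    qed
    have hb: "0 \<le> h t z" "h t z \<le> 1" "\<bar>h t z\<bar> \<le> 1" for t z by (auto simp: h_def)
    have qb: "0 \<le> q t z" "q t z \<le> 1" "\<bar>q t z\<bar> \<le> 1" for t z by (auto simp: q_def)
    have ih: "integrable M (h t)" for t
      by (rule integrable_const_bound[where B=1]) (use hb hm meq in auto)
    have iq: "integrable M (q t)" for t
      by (rule integrable_const_bound[where B=1]) (use qb qm meq in auto)
    define a where "a t = integral\<^sup>L M (h t)" for t
    define b where "b t = integral\<^sup>L M (q t)" for t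
    have rec: "a t = (1 - ph) * a (Suc t) + ph * b t" for t
    proof -
      have "a t = (\<integral>z. kapply (Plam n m u eps l) (h t) z \<partial>M)"
        unfolding a_def by (rule inv_int[OF Mp Plam_supp Plam_meas I hm, where C=1]) (rule hb)
      also have "\<dots> = (\<integral>z. (1 - ph) * h (Suc t) z + ph * q t z \<partial>M)"
      proof (rule Bochner_Integration.integral_cong[OF refl])
        fix z assume "z \<in> space M" hence z: "z \<in> ZZ" by (simp add: spM)
        have "kapply (Plam n m u eps l) (h t) z =
              (1 - ph) * kapply (stp {}) (h t) z + ph * kapply (Qlam n m u eps l) (h t) z"
          unfolding ph_def by (rule kapply_Plam_decomp[OF l z]) (rule hb)
        also have "kapply (stp {}) (h t) z = h (Suc t) z"
          unfolding kapply_def h_def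
          by (simp add: measure_bind_exp[symmetric] kpow_Suc' kcomp_def del: kpow.simps)
        also have "kapply (Qlam n m u eps l) (h t) z = q t z"
          unfolding kapply_def h_def q_def
          by (simp add: measure_bind_exp[symmetric] kcomp_def)
        finally show "kapply (Plam n m u eps l) (h t) z = (1 - ph) * h (Suc t) z + ph * q t z" .
      qed
      also have "\<dots> = (1 - ph) * a (Suc t) + ph * b t"
        unfolding a_def b_def using ih iq by simp
      finally show ?thesis .
    qed
    define c where "c t = (1 - ph) ^ t * ph * b t" for t
    have tel: "a 0 = (\<Sum>t<T. c t) + (1 - ph) ^ T * a T" for T
    proof (induction T)
      case 0 then show ?case by simp
    next
      case (Suc T)
      then show ?case using rec[of T] by (simp add: c_def algebra_simps)
    qed
    have a0: "a 0 = measure M B"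
    proof -
      have "a 0 = integral\<^sup>L M (indicator B)"
        unfolding a_def h_def by (simp add: measure_return_pmf)
      also have "\<dots> = measure M B" using B by (simp add: Int_absorb2 sets.sets_into_space)
      finally show ?thesis .
    qed
    have aT: "0 \<le> a T" "a T \<le> 1" for T
    proof -
      show "0 \<le> a T" unfolding a_def by (intro Bochner_Integration.integral_nonneg hb)
      show "a T \<le> 1" unfolding a_def by (rule integral_le_const[OF ih]) (use hb in auto)
    qed
    have bnn: "0 \<le> b t" for t unfolding b_def by (intro Bochner_Integration.integral_nonneg qb)
    have pw: "(\<lambda>T. (1 - ph) ^ T) \<longlonglongrightarrow> 0" using ph by (intro LIMSEQ_power_zero) auto
    have rem: "(\<lambda>T. (1 - ph) ^ T * a T) \<longlonglongrightarrow> 0"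
    proof (rule tendsto_sandwich[OF _ _ tendsto_const pw])
      show "\<forall>\<^sub>F T in sequentially. 0 \<le> (1 - ph) ^ T * a T"
        using ph aT by (intro always_eventually allI mult_nonneg_nonneg) auto
      show "\<forall>\<^sub>F T in sequentially. (1 - ph) ^ T * a T \<le> (1 - ph) ^ T"
        using ph aT by (intro always_eventually allI mult_left_le) auto
    qed
    have "(\<lambda>T. a 0 - (1 - ph) ^ T * a T) \<longlonglongrightarrow> a 0 - 0"
      by (intro tendsto_diff tendsto_const rem)
    moreover have "(\<lambda>T. a 0 - (1 - ph) ^ T * a T) = (\<lambda>T. \<Sum>t<T. c t)"
      using tel by (auto simp: fun_eq_iff algebra_simps)
    ultimately have csum: "c sums measure M B"
      unfolding sums_def using a0 by simp
    have cnn: "0 \<le> c t" for t using ph bnn by (simp add: c_def)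
    have PLz: "emeasure (measure_pmf (PL n m u eps l z)) B = (\<Sum>t. ennreal (pmf (geometric_pmf ph) t * q t z))" for z
    proof -
      have "PL n m u eps l z = bind_pmf (geometric_pmf ph) (\<lambda>t. kcomp (Qlam n m u eps l) (kpow (stp {}) t) z)"
        unfolding PL_def kcomp_def Rlam_eq ph_def by (rule bind_commute_pmf)
      then have "emeasure (measure_pmf (PL n m u eps l z)) B =
          (\<integral>\<^sup>+t. emeasure (measure_pmf (kcomp (Qlam n m u eps l) (kpow (stp {}) t) z)) B \<partial>measure_pmf (geometric_pmf ph))"
        by (simp add: emeasure_bind_pmf')
      also have "\<dots> = (\<Sum>t. ennreal (pmf (geometric_pmf ph) t) * ennreal (q t z))"
        by (simp add: nn_integral_measure_pmf nn_integral_count_space_nat q_def measure_pmf.emeasure_eq_measure)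
      also have "\<dots> = (\<Sum>t. ennreal (pmf (geometric_pmf ph) t * q t z))"
        by (simp add: ennreal_mult')
      finally show ?thesis .
    qed
    have "(\<integral>\<^sup>+z. emeasure (measure_pmf (PL n m u eps l z)) B \<partial>M) =
          (\<integral>\<^sup>+z. (\<Sum>t. ennreal (pmf (geometric_pmf ph) t * q t z)) \<partial>M)"
      by (simp add: PLz)
    also have "\<dots> = (\<Sum>t. \<integral>\<^sup>+z. ennreal (pmf (geometric_pmf ph) t * q t z) \<partial>M)"
      by (rule nn_integral_suminf) (use qm meq in auto)
    also have "\<dots> = (\<Sum>t. ennreal (c t))"
    proof (rule suminf_cong)
      fix t
      have "(\<integral>\<^sup>+z. ennreal (pmf (geometric_pmf ph) t * q t z) \<partial>M) =
            ennreal (\<integral>z. pmf (geometric_pmf ph) t * q t z \<partial>M)"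
        by (rule nn_integral_eq_integral) (use iq qb in auto)
      also have "\<dots> = ennreal (c t)"
        using ph by (simp add: b_def c_def)
      finally show "(\<integral>\<^sup>+z. ennreal (pmf (geometric_pmf ph) t * q t z) \<partial>M) = ennreal (c t)" .
    qed
    also have "\<dots> = ennreal (\<Sum>t. c t)"
      by (rule suminf_ennreal2[OF cnn]) (use csum in \<open>simp add: sums_summable\<close>)
    also have "\<dots> = emeasure M B"
      using csum by (simp add: sums_unique[symmetric] emeasure_eq_measure)
    finally show "(\<integral>\<^sup>+z. emeasure (measure_pmf (PL n m u eps l z)) B \<partial>M) = emeasure M B" .
  qed
qed

end


definition fk :: "'a::metric_space set \<Rightarrow> nat \<Rightarrow> 'a \<Rightarrow> real" where
  "fk U k w = min 1 (real k * infdist w (- U))"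

lemma fk_cont: "continuous_on A (fk U k)"
  unfolding fk_def by (intro continuous_intros continuous_at_imp_continuous_on ballI continuous_infdist continuous_ident)

lemma fk_bd: "0 \<le> fk U k w" "fk U k w \<le> 1" "\<bar>fk U k w\<bar> \<le> 1"
  by (auto simp: fk_def infdist_nonneg)

lemma fk_Cb: "Cb Z (fk U k)"
  unfolding Cb_def bounded_real using fk_cont fk_bd by blast

lemma fk_mono: "incseq (\<lambda>k w. ennreal (fk U k w))"
  unfolding incseq_def le_fun_def
proof (intro allI impI)
  fix m n :: nat and w assume mn: "m \<le> n"
  have "real m * infdist w (-U) \<le> real n * infdist w (-U)"
    by (intro mult_right_mono) (use mn infdist_nonneg in auto)
  then show "ennreal (fk U m w) \<le> ennreal (fk U n w)"
    unfolding fk_def by (intro ennreal_leI min.mono order.refl)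
qed

lemma fk_SUP:
  assumes U: "open U" "U \<noteq> UNIV"
  shows "(SUP k. ennreal (fk U k w)) = indicator U w"
proof (cases "w \<in> U")
  case False
  then show ?thesis by (simp add: fk_def)
next
  case True
  have d: "0 < infdist w (- U)"
    using U True by (intro infdist_pos_not_in_closed) auto
  define K where "K = nat \<lceil>1 / infdist w (- U)\<rceil>"
  have "1 / infdist w (- U) \<le> real K" unfolding K_def by linarith
  then have "1 \<le> real K * infdist w (- U)" using d by (simp add: field_simps)
  then have fK: "fk U K w = 1" by (simp add: fk_def)
  have "(SUP k. ennreal (fk U k w)) = 1"
  proof (rule antisym)
    show "(SUP k. ennreal (fk U k w)) \<le> 1" by (intro SUP_least) (simp add: fk_bd)
    show "1 \<le> (SUP k. ennreal (fk U k w))" using fK by (intro SUP_upper2[of K]) auto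
  qed
  then show ?thesis using True by simp
qed

lemma nn_open_SUP:
  assumes U: "open U" "U \<noteq> UNIV" and fin: "finite_measure M"
    and meas: "\<And>k. fk U k \<in> borel_measurable M"
  shows "(\<integral>\<^sup>+w. indicator U w \<partial>M) = (SUP k. ennreal (integral\<^sup>L M (fk U k)))"
proof -
  have "(\<integral>\<^sup>+w. indicator U w \<partial>M) = (\<integral>\<^sup>+w. (SUP k. ennreal (fk U k w)) \<partial>M)"
    by (simp add: fk_SUP[OF U])
  also have "\<dots> = (SUP k. \<integral>\<^sup>+w. ennreal (fk U k w) \<partial>M)"
    by (rule nn_integral_monotone_convergence_SUP[OF fk_mono]) (use meas in simp)
  also have "\<dots> = (SUP k. ennreal (integral\<^sup>L M (fk U k)))"
  proof (intro SUP_cong refl)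
    fix k
    show "(\<integral>\<^sup>+w. ennreal (fk U k w) \<partial>M) = ennreal (integral\<^sup>L M (fk U k))"
      by (rule nn_integral_eq_integral)
         (auto intro!: finite_measure.integrable_const_bound[OF fin, where B=1] meas simp: fk_bd)
  qed
  finally show ?thesis .
qed

lemma sets_MZ_gen:
  "sets (restrict_space borel Z) = sigma_sets Z {U \<inter> Z | U. open U}"
proof -
  have "sets (restrict_space borel Z) = sets (vimage_algebra Z (\<lambda>x. x) borel)"
    by (rule restrict_space_eq_vimage_algebra) simp
  also have "\<dots> = {(\<lambda>x. x) -` A \<inter> Z | A. A \<in> sets borel}"
    by (rule sets_vimage_algebra2) simp
  also have "\<dots> = {(\<lambda>x. x) -` A \<inter> Z | A. A \<in> sigma_sets UNIV {S. open S}}"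
    by (simp add: sets_borel)
  also have "\<dots> = sigma_sets Z {(\<lambda>x. x) -` A \<inter> Z | A. A \<in> {S. open S}}"
    by (rule sigma_sets_vimage_commute) simp
  also have "\<dots> = sigma_sets Z {U \<inter> Z | U. open U}" by simp
  finally show ?thesis .
qed

lemma Int_stable_gen: "Int_stable {U \<inter> Z | U. open U}"
  unfolding Int_stable_def
proof safe
  fix U V :: "'a set" assume "open U" "open V"
  then have "U \<inter> Z \<inter> (V \<inter> Z) = (U \<inter> V) \<inter> Z \<and> open (U \<inter> V)" by auto
  then show "\<exists>W. U \<inter> Z \<inter> (V \<inter> Z) = W \<inter> Z \<and> open W" by blast
qed

lemma gen_sets: "X \<in> {U \<inter> Z | U. open U} \<Longrightarrow> X \<in> sets (restrict_space borel Z)"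
  by (auto simp: sets_restrict_space)


type_synonym estate = "(nat \<Rightarrow> real) \<times> (nat \<Rightarrow> nat \<Rightarrow> real)"

definition emb :: "state \<Rightarrow> estate" where "emb z = ((\<lambda>i. real (fst z i)), snd z)"
definition remb :: "estate \<Rightarrow> state" where "remb w = ((\<lambda>i. nat (round (fst w i))), snd w)"

lemma remb_emb: "remb (emb z) = z" by (simp add: emb_def remb_def)

lemma emb_cont: "continuous_on A emb"
proof -
  have "continuous_on UNIV (\<lambda>z::state. \<lambda>i. real (fst z i))"
  proof (rule continuous_on_coordinatewise_then_product)
    fix i
    have c1: "continuous_on UNIV (\<lambda>z::state. fst z i)"
      by (rule continuous_on_product_then_coordinatewise[OF continuous_on_fst[OF continuous_on_id]])
    have c2: "continuous_on UNIV (\<lambda>x::nat. real x)" by (simp add: continuous_on_discrete)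
    show "continuous_on UNIV (\<lambda>z::state. real (fst z i))"
      by (rule continuous_on_compose2[OF c2 c1]) auto
  qed
  then have "continuous_on UNIV emb"
    unfolding emb_def by (intro continuous_on_Pair continuous_on_snd continuous_on_id)
  then show ?thesis using continuous_on_subset by blast
qed

lemma nat_round_cont: "continuous_on (range real) (\<lambda>x::real. nat (round x))"
  unfolding continuous_on_topological
proof (intro ballI allI impI)
  fix x B assume x: "x \<in> range real" and B: "open B" and xB: "nat (round x) \<in> B"
  show "\<exists>A. open A \<and> x \<in> A \<and> (\<forall>y\<in>range real. y \<in> A \<longrightarrow> nat (round y) \<in> B)"
  proof (intro exI[of _ "ball x (1/2)"] conjI ballI impI)
    show "open (ball x (1/2))" by simp
    show "x \<in> ball x (1/2)" by simp
    fix y assume y: "y \<in> range real" "y \<in> ball x (1/2)"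
    obtain k where k: "x = real k" using x by blast
    obtain j where j: "y = real j" using y(1) by blast
    have "\<bar>real j - real k\<bar> < 1/2" using y(2) k j by (simp add: dist_real_def abs_minus_commute)
    then have "j = k" by linarith
    then show "nat (round y) \<in> B" using xB k j by simp
  qed
qed

lemma remb_cont: "continuous_on (range emb) remb"
proof -
  have "continuous_on (range emb) (\<lambda>w::estate. \<lambda>i. nat (round (fst w i)))"
  proof (rule continuous_on_coordinatewise_then_product)
    fix i
    have c1: "continuous_on (range emb) (\<lambda>w::estate. fst w i)"
      by (rule continuous_on_product_then_coordinatewise[OF continuous_on_fst[OF continuous_on_id]])
    show "continuous_on (range emb) (\<lambda>w::estate. nat (round (fst w i)))"
      by (rule continuous_on_compose2[OF nat_round_cont c1]) (auto simp: emb_def)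
  qed
  then show ?thesis
    unfolding remb_def by (intro continuous_on_Pair continuous_on_snd continuous_on_id)
qed

lemma open_emb:
  assumes U: "open (U :: state set)"
  obtains V where "open V" "U = emb -` V"
proof -
  obtain A where A: "open A" "A \<inter> range emb = remb -` U \<inter> range emb"
    using remb_cont U unfolding continuous_on_open_invariant by blast
  have "emb -` A = U"
  proof (intro equalityI subsetI)
    fix z assume "z \<in> emb -` A"
    then have "emb z \<in> A \<inter> range emb" by auto
    then have "remb (emb z) \<in> U" using A(2) by blast
    then show "z \<in> U" by (simp add: remb_emb)
  next
    fix z assume "z \<in> U"
    then have "emb z \<in> remb -` U \<inter> range emb" by (simp add: remb_emb)
    then show "z \<in> emb -` A" using A(2) by blast
  qed
  then show ?thesis using that A(1) by blast
qed

definition ge :: "estate set \<Rightarrow> nat \<Rightarrow> state \<Rightarrow> real" where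
  "ge V k w = fk V k (emb w)"

lemma ge_Cb: "Cb Z (ge V k)"
proof -
  have "continuous_on Z (ge V k)"
    unfolding ge_def by (rule continuous_on_compose2[OF fk_cont emb_cont]) auto
  then show ?thesis unfolding Cb_def bounded_real ge_def using fk_bd by blast
qed

lemma ge_bd: "\<bar>ge V k w\<bar> \<le> 1" by (simp add: ge_def fk_bd)

lemma nn_open_SUP_e:
  assumes V: "open V" "V \<noteq> UNIV" and fin: "finite_measure M"
    and meas: "\<And>k. ge V k \<in> borel_measurable M"
  shows "(\<integral>\<^sup>+w. indicator (emb -` V) w \<partial>M) = (SUP k. ennreal (integral\<^sup>L M (ge V k)))"
proof -
  have "(\<integral>\<^sup>+w. indicator (emb -` V) w \<partial>M) = (\<integral>\<^sup>+w. (SUP k. ennreal (ge V k w)) \<partial>M)"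
    by (intro nn_integral_cong) (simp add: fk_SUP[OF V] ge_def indicator_def)
  also have "\<dots> = (SUP k. \<integral>\<^sup>+w. ennreal (ge V k w) \<partial>M)"
  proof (rule nn_integral_monotone_convergence_SUP)
    show "incseq (\<lambda>k w. ennreal (ge V k w))"
      using fk_mono[of V] unfolding incseq_def le_fun_def ge_def by blast
  qed (use meas in simp)
  also have "\<dots> = (SUP k. ennreal (integral\<^sup>L M (ge V k)))"
  proof (intro SUP_cong refl)
    fix k
    show "(\<integral>\<^sup>+w. ennreal (ge V k w) \<partial>M) = ennreal (integral\<^sup>L M (ge V k))"
      by (rule nn_integral_eq_integral)
         (auto intro!: finite_measure.integrable_const_bound[OF fin, where B=1] meas AE_I2 simp: ge_bd, simp add: ge_def fk_bd)
  qed
  finally show ?thesis .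
qed

lemma open_emeasure_SUP:
  assumes sL: "sets L = sets (restrict_space borel Z)" and fin: "finite_measure L"
    and V: "open V" "V \<noteq> UNIV"
  shows "emeasure L (emb -` V \<inter> Z) = (SUP k. ennreal (integral\<^sup>L L (ge V k)))"
proof -
  have spL: "space L = Z" using sets_eq_imp_space_eq[OF sL] by simp
  have oU: "open (emb -` V)" using V(1) emb_cont[of UNIV] by (simp add: continuous_on_open_vimage)
  have UZ: "emb -` V \<inter> Z \<in> sets L" using sL oU by (auto simp: sets_restrict_space)
  have "emeasure L (emb -` V \<inter> Z) = (\<integral>\<^sup>+w. indicator (emb -` V \<inter> Z) w \<partial>L)"
    using UZ by simp
  also have "\<dots> = (\<integral>\<^sup>+w. indicator (emb -` V) w \<partial>L)"
    by (intro nn_integral_cong) (auto simp: spL indicator_def)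
  also have "\<dots> = (SUP k. ennreal (integral\<^sup>L L (ge V k)))"
  proof (rule nn_open_SUP_e[OF V fin])
    fix k
    have "ge V k \<in> borel_measurable (restrict_space borel Z)" by (rule Cb_meas[OF ge_Cb])
    then show "ge V k \<in> borel_measurable L" using measurable_cong_sets[OF sL refl] by blast
  qed
  finally show ?thesis .
qed

context gameP
begin

lemma PiK_meas: "kmeas ZZ PiK"
proof -
  have ks: "kk ZZ PiK \<in> MZ ZZ \<rightarrow>\<^sub>M subprob_algebra (MZ ZZ)"
  proof (rule measurable_subprob_algebra_generated[OF sets_MZ_gen Int_stable_gen])
    show "{U \<inter> ZZ | U. open U} \<subseteq> Pow ZZ" by auto
    show "\<And>a. a \<in> space (MZ ZZ) \<Longrightarrow> subprob_space (kk ZZ PiK a)"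
      using PiK_supp by (auto simp: ksupp_def intro!: prob_space_imp_subprob_space kk_prob)
    show "\<And>a. a \<in> space (MZ ZZ) \<Longrightarrow> sets (kk ZZ PiK a) = sets (MZ ZZ)" by simp
    have one: "(\<lambda>a. emeasure (kk ZZ PiK a) ZZ) \<in> borel_measurable (MZ ZZ)"
    proof -
      have "emeasure (kk ZZ PiK a) ZZ = 1" if "a \<in> ZZ" for a
      proof -
        interpret prob_space "kk ZZ PiK a" using PiK_supp that by (auto simp: ksupp_def intro!: kk_prob)
        have "space (kk ZZ PiK a) = ZZ" by (simp add: kk_def)
        then show ?thesis using emeasure_space_1 by simp
      qed
      then have "(\<lambda>a. emeasure (kk ZZ PiK a) ZZ) \<in> borel_measurable (MZ ZZ) \<longleftrightarrow> (\<lambda>_. 1::ennreal) \<in> borel_measurable (MZ ZZ)"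
        by (intro measurable_cong) simp
      then show ?thesis by simp
    qed
    then show "(\<lambda>a. emeasure (kk ZZ PiK a) ZZ) \<in> borel_measurable (MZ ZZ)" .
    fix A assume "A \<in> {U \<inter> ZZ | U. open U}"
    then obtain U where A0: "A = U \<inter> ZZ" and U0: "open U" by blast
    obtain V where V: "open V" "U = emb -` V" using open_emb[OF U0] by blast
    have A: "A = emb -` V \<inter> ZZ" using A0 V by simp
    have U: "open (emb -` V)" using U0 V by simp
    show "(\<lambda>a. emeasure (kk ZZ PiK a) A) \<in> borel_measurable (MZ ZZ)"
    proof (cases "V = UNIV")
      case True then show ?thesis using one A by simp
    next
      case False
      have AS: "A \<in> sets (MZ ZZ)" using A U by (intro gen_sets) blast
      have eq: "emeasure (kk ZZ PiK a) A = (SUP k. ennreal (kapply PiK (ge V k) a))" if a: "a \<in> ZZ" for a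
      proof -
        have sa: "set_pmf (PiK a) \<subseteq> ZZ" using PiK_supp a by (auto simp: ksupp_def)
        have "emeasure (kk ZZ PiK a) A = emeasure (measure_pmf (PiK a)) A" by (rule kk_emeasure[OF AS])
        also have "\<dots> = (\<integral>\<^sup>+w. indicator (emb -` V \<inter> ZZ) w \<partial>measure_pmf (PiK a))" using A by simp
        also have "\<dots> = (\<integral>\<^sup>+w. indicator (emb -` V) w \<partial>measure_pmf (PiK a))"
          using sa by (intro nn_integral_cong_AE) (auto simp: AE_measure_pmf_iff indicator_def)
        also have "\<dots> = (SUP k. ennreal (kapply PiK (ge V k) a))"
          unfolding kapply_def by (rule nn_open_SUP_e[OF V(1) False prob_space.axioms(1)[OF prob_space_measure_pmf]]) simp
        finally show ?thesis .
      qed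
      have "(\<lambda>a. SUP k. ennreal (kapply PiK (ge V k) a)) \<in> borel_measurable (MZ ZZ)"
      proof (rule borel_measurable_SUP)
        fix k
        have "Cb ZZ (kapply PiK (ge V k))" by (rule Cb_kapply[OF PiK_supp PiK_feller ge_Cb])
        then have "kapply PiK (ge V k) \<in> borel_measurable (MZ ZZ)" by (rule Cb_meas)
        then show "(\<lambda>a. ennreal (kapply PiK (ge V k) a)) \<in> borel_measurable (MZ ZZ)" by simp
      qed simp
      moreover have "(\<lambda>a. emeasure (kk ZZ PiK a) A) \<in> borel_measurable (MZ ZZ) \<longleftrightarrow> (\<lambda>a. SUP k. ennreal (kapply PiK (ge V k) a)) \<in> borel_measurable (MZ ZZ)"
        by (intro measurable_cong) (simp add: eq)
      ultimately show ?thesis by simp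
    qed
  qed
  show ?thesis unfolding kmeas_def
  proof safe
    fix B assume B: "B \<in> sets (MZ ZZ)"
    have "(\<lambda>a. emeasure (kk ZZ PiK a) B) \<in> borel_measurable (MZ ZZ)"
      by (rule measurable_emeasure_kernel[OF ks B])
    then show "(\<lambda>z. emeasure (measure_pmf (PiK z)) B) \<in> borel_measurable (MZ ZZ)"
      by (simp add: kk_emeasure[OF B])
  qed
qed

end


context gameP
begin

lemma part_d:
  assumes ls: "\<forall>k. 0 < ls k \<and> ls k \<le> 1" "ls \<longlonglongrightarrow> 0"
    and Ms: "\<forall>k. ipm ZZ (Plam n m u eps (ls k)) (Ms k)"
    and nu: "\<nu> \<in> prob_measures ZZ" and wc: "weak_conv_Cb ZZ Ms \<nu>"
  shows "ipm ZZ (kcomp (Qone n m u eps) PiK) \<nu>"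
proof -
  define QP where "QP = kcomp (Qone n m u eps) PiK"
  have QPs: "ksupp ZZ QP" unfolding QP_def by (rule kcomp_supp[OF Qone_supp PiK_supp])
  have QPm: "kmeas ZZ QP" unfolding QP_def by (rule kcomp_meas[OF Qone_supp Qone_meas PiK_meas])
  have QPf: "kfeller ZZ QP" unfolding QP_def by (rule kcomp_feller[OF Qone_supp PiK_supp Qone_feller PiK_feller])
  have Mk: "Ms k \<in> prob_measures ZZ" for k using Ms by (simp add: ipm_def)
  have IPL: "ipm ZZ (PL n m u eps (ls k)) (Ms k)" for k using part_c ls Ms by auto
  have flt: "filterlim ls (at_right 0) sequentially"
    by (rule tendsto_imp_filterlim_at_right[OF ls(2)]) (use ls(1) in auto)
  have step1: "integral\<^sup>L \<nu> f = integral\<^sup>L \<nu> (kapply QP f)" if f: "Cb ZZ f" for f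
  proof -
    obtain C where C: "\<And>z. z \<in> ZZ \<Longrightarrow> \<bar>f z\<bar> \<le> C" using Cb_bound[OF f] by blast
    have fm: "f \<in> borel_measurable (MZ ZZ)" by (rule Cb_meas[OF f])
    have Cq: "Cb ZZ (kapply QP f)" by (rule Cb_kapply[OF QPs QPf f])
    have L1: "(\<lambda>k. integral\<^sup>L (Ms k) f) \<longlonglongrightarrow> integral\<^sup>L \<nu> f" using wc f by (simp add: weak_conv_Cb_def)
    have L2: "(\<lambda>k. integral\<^sup>L (Ms k) (kapply QP f)) \<longlonglongrightarrow> integral\<^sup>L \<nu> (kapply QP f)"
      using wc Cq by (simp add: weak_conv_Cb_def)
    define \<sigma> where "\<sigma> k = supnorm ZZ (\<lambda>z. kapply (PL n m u eps (ls k)) f z - kapply QP f z)" for k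
    have \<sigma>0: "\<sigma> \<longlonglongrightarrow> 0"
      unfolding \<sigma>_def QP_def using filterlim_compose[OF part_b[OF f] flt] .
    have bnd: "\<bar>integral\<^sup>L (Ms k) f - integral\<^sup>L (Ms k) (kapply QP f)\<bar> \<le> \<sigma> k" for k
    proof -
      have sM: "sets (Ms k) = sets (MZ ZZ)" and pM: "prob_space (Ms k)" using Mk[of k] by (auto simp: prob_measures_def)
      have spM: "space (Ms k) = ZZ" using sets_eq_imp_space_eq[OF sM] by simp
      have meq: "borel_measurable (Ms k) = borel_measurable (MZ ZZ)" by (rule measurable_cong_sets[OF sM refl])
      have fM: "finite_measure (Ms k)" using pM by (rule prob_space.axioms(1))
      let ?p = "kapply (PL n m u eps (ls k)) f" and ?q = "kapply QP f"
      have l: "0 < ls k" "ls k \<le> 1" using ls(1) by auto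
      have pb: "\<bar>?p z\<bar> \<le> C" if "z \<in> ZZ" for z by (rule kapply_bound[OF PL_supp that C])
      have qb: "\<bar>?q z\<bar> \<le> C" if "z \<in> ZZ" for z by (rule kapply_bound[OF QPs that C])
      have pm: "?p \<in> borel_measurable (Ms k)" unfolding meq by (rule kmeas_int[OF PL_supp PL_meas[OF l] fm])
      have qm: "?q \<in> borel_measurable (Ms k)" unfolding meq by (rule kmeas_int[OF QPs QPm fm])
      have ip: "integrable (Ms k) ?p"
        by (rule finite_measure.integrable_const_bound[OF fM, where B=C]) (use pb pm spM in \<open>auto intro!: AE_I2\<close>)
      have iq: "integrable (Ms k) ?q"
        by (rule finite_measure.integrable_const_bound[OF fM, where B=C]) (use qb qm spM in \<open>auto intro!: AE_I2\<close>)
      have dif: "\<bar>?p z - ?q z\<bar> \<le> 2 * C" if "z \<in> ZZ" for z using pb[OF that] qb[OF that] by linarith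
      have "integral\<^sup>L (Ms k) f = integral\<^sup>L (Ms k) ?p"
        by (rule inv_int[OF Mk PL_supp PL_meas[OF l] IPL fm C])
      then have "integral\<^sup>L (Ms k) f - integral\<^sup>L (Ms k) ?q = integral\<^sup>L (Ms k) (\<lambda>z. ?p z - ?q z)"
        by (simp add: Bochner_Integration.integral_diff[OF ip iq])
      also have "\<bar>\<dots>\<bar> \<le> \<sigma> k"
      proof -
        have "\<bar>integral\<^sup>L (Ms k) (\<lambda>z. ?p z - ?q z)\<bar> \<le> integral\<^sup>L (Ms k) (\<lambda>z. \<bar>?p z - ?q z\<bar>)"
          by (rule integral_abs_bound)
        also have "\<dots> \<le> \<sigma> k"
        proof (rule prob_space.integral_le_const[OF pM])
          show "integrable (Ms k) (\<lambda>z. \<bar>?p z - ?q z\<bar>)"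
            by (rule integrable_abs[OF Bochner_Integration.integrable_diff[OF ip iq]])
          show "AE z in Ms k. \<bar>?p z - ?q z\<bar> \<le> \<sigma> k"
            unfolding \<sigma>_def by (rule AE_I2) (use supnorm_ge[OF dif] spM in auto)
        qed
        finally show ?thesis .
      qed
      finally show ?thesis .
    qed
    have L3: "(\<lambda>k. integral\<^sup>L (Ms k) f - integral\<^sup>L (Ms k) (kapply QP f)) \<longlonglongrightarrow> 0"
      by (rule Lim_null_comparison[OF _ \<sigma>0]) (use bnd in auto)
    have "(\<lambda>k. integral\<^sup>L (Ms k) f - integral\<^sup>L (Ms k) (kapply QP f)) \<longlonglongrightarrow> integral\<^sup>L \<nu> f - integral\<^sup>L \<nu> (kapply QP f)"
      by (rule tendsto_diff[OF L1 L2])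
    with L3 have "integral\<^sup>L \<nu> f - integral\<^sup>L \<nu> (kapply QP f) = 0" using LIMSEQ_unique by blast
    then show ?thesis by simp
  qed
  have sN0: "sets \<nu> = sets (MZ ZZ)" and p\<nu>: "prob_space \<nu>" using nu by (auto simp: prob_measures_def)
  have sp\<nu>: "space \<nu> = ZZ" using sets_eq_imp_space_eq[OF sN0] by simp
  have ne\<nu>: "space \<nu> \<noteq> {}" using prob_space.not_empty[OF p\<nu>] .
  have fin\<nu>: "finite_measure \<nu>" using p\<nu> by (rule prob_space.axioms(1))
  have km: "kk ZZ QP \<in> \<nu> \<rightarrow>\<^sub>M subprob_algebra (MZ ZZ)"
    using measurable_cong_sets[OF sN0 refl] kk_measurable[OF QPs QPm] by blast
  define N where "N = bind \<nu> (kk ZZ QP)"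
  have sN: "sets N = sets (MZ ZZ)" unfolding N_def by (subst sets_bind) (use ne\<nu> in auto)
  have spN: "space N = ZZ" using sets_eq_imp_space_eq[OF sN] by simp
  have emN: "emeasure N X = (\<integral>\<^sup>+z. emeasure (kk ZZ QP z) X \<partial>\<nu>)" if "X \<in> sets (MZ ZZ)" for X
    unfolding N_def by (rule emeasure_bind[OF ne\<nu> km that])
  have NZ: "emeasure N ZZ = 1"
  proof -
    have Z: "ZZ \<in> sets (MZ ZZ)" using sets.top[of "MZ ZZ"] by simp
    have "emeasure N ZZ = (\<integral>\<^sup>+z. emeasure (kk ZZ QP z) ZZ \<partial>\<nu>)" by (rule emN[OF Z])
    also have "\<dots> = (\<integral>\<^sup>+z. 1 \<partial>\<nu>)"
    proof (rule nn_integral_cong)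
      fix z assume "z \<in> space \<nu>"
      then have z: "z \<in> ZZ" by (simp add: sp\<nu>)
      interpret prob_space "kk ZZ QP z" using QPs z by (auto simp: ksupp_def intro!: kk_prob)
      have "space (kk ZZ QP z) = ZZ" by (simp add: kk_def)
      then show "emeasure (kk ZZ QP z) ZZ = 1" using emeasure_space_1 by simp
    qed
    also have "\<dots> = 1" using prob_space.emeasure_space_1[OF p\<nu>] by simp
    finally show ?thesis .
  qed
  have \<nu>Z: "emeasure \<nu> ZZ = 1" using prob_space.emeasure_space_1[OF p\<nu>] sp\<nu> by simp
  have finN: "finite_measure N" by (rule finite_measureI) (simp add: spN NZ)
  have intN: "integral\<^sup>L N g = integral\<^sup>L \<nu> (kapply QP g)" if g: "Cb ZZ g" for g
  proof -
    obtain C where C: "\<And>z. z \<in> ZZ \<Longrightarrow> \<bar>g z\<bar> \<le> C" using Cb_bound[OF g] by blast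
    have gm: "g \<in> borel_measurable (MZ ZZ)" by (rule Cb_meas[OF g])
    have "integral\<^sup>L N g = (\<integral>z. integral\<^sup>L (kk ZZ QP z) g \<partial>\<nu>)"
      unfolding N_def
    proof (rule integral_bind[OF gm _ km fin\<nu>, where B=C and B'=1])
      show "\<And>x. x \<in> space (MZ ZZ) \<Longrightarrow> \<bar>g x\<bar> \<le> C" using C by simp
      show "AE x in \<nu>. emeasure (kk ZZ QP x) (space (kk ZZ QP x)) \<le> ennreal 1"
        using km by (auto intro!: AE_I2 subprob_space.subprob_emeasure_le_1 simp: space_subprob_algebra dest!: measurable_space)
    qed
    also have "\<dots> = integral\<^sup>L \<nu> (kapply QP g)"
      using QPs by (intro Bochner_Integration.integral_cong refl) (auto simp: sp\<nu> kapply_def ksupp_def intro!: kk_int[OF gm])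
    finally show ?thesis .
  qed
  have eqG: "emeasure N X = emeasure \<nu> X" if X: "X \<in> {U \<inter> ZZ | U. open U}" for X
  proof -
    obtain U where XU: "X = U \<inter> ZZ" and U: "open U" using X by blast
    obtain V where V: "open V" "U = emb -` V" using open_emb[OF U] by blast
    show ?thesis
    proof (cases "V = UNIV")
      case True then show ?thesis using XU V NZ \<nu>Z by simp
    next
      case False
      have "emeasure N X = (SUP k. ennreal (integral\<^sup>L N (ge V k)))"
        unfolding XU V(2) by (rule open_emeasure_SUP[OF sN finN V(1) False])
      also have "\<dots> = (SUP k. ennreal (integral\<^sup>L \<nu> (ge V k)))"
        by (intro SUP_cong refl) (simp add: intN[OF ge_Cb] step1[OF ge_Cb])
      also have "\<dots> = emeasure \<nu> X"
        unfolding XU V(2) by (rule open_emeasure_SUP[OF sN0 fin\<nu> V(1) False, symmetric])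
      finally show ?thesis .
    qed
  qed
  have NE: "N = \<nu>"
  proof (rule measure_eqI_generator_eq[OF Int_stable_gen _ eqG, where \<Omega>=ZZ and A="\<lambda>_. ZZ"])
    show "{U \<inter> ZZ | U. open U} \<subseteq> Pow ZZ" by auto
    show "sets N = sigma_sets ZZ {U \<inter> ZZ | U. open U}" using sN sets_MZ_gen by simp
    show "sets \<nu> = sigma_sets ZZ {U \<inter> ZZ | U. open U}" using sN0 sets_MZ_gen by simp
    show "range (\<lambda>_. ZZ) \<subseteq> {U \<inter> ZZ | U. open U}" by auto
    show "(\<Union>i::nat. ZZ) = ZZ" by simp
    show "\<And>i. emeasure N ZZ \<noteq> \<infinity>" using NZ by simp
  qed auto
  show ?thesis
    using ipm_iff_bind[OF nu QPs QPm] NE by (simp add: N_def QP_def)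
qed

end

theorem proposition4p3:
  fixes n :: nat and m :: "nat \<Rightarrow> nat" and u :: "nat \<Rightarrow> (nat \<Rightarrow> nat) \<Rightarrow> real"
    and eps :: real and PiK :: "state \<Rightarrow> state pmf"
  assumes n_pos: "n \<ge> 1"
    and acts: "\<forall>i<n. m i \<ge> 1"
    and upos: "\<forall>i<n. \<forall>a\<in>profiles n m. u i a > 0"
    and eps_pos: "eps > 0"
    and eps_small: "\<forall>i<n. \<forall>a\<in>profiles n m. eps * u i a < 1"
    and Pi_lim: "\<forall>f. Cb (states n m) f \<longrightarrow>
        (\<lambda>t. supnorm (states n m)
               (\<lambda>z. kapply (kpow (Plam n m u eps 0) t) f z - kapply PiK f z)) \<longlonglongrightarrow> 0"
    and Pi_supp: "\<forall>z\<in>states n m. set_pmf (PiK z) \<subseteq> pure_states n m"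
  shows "(\<forall>f. Cb (states n m) f \<longrightarrow>
            ((\<lambda>lam. supnorm (states n m)
               (\<lambda>z. kapply (Rlam n m u eps lam) f z - kapply PiK f z)) \<longlongrightarrow> 0) (at_right 0))
       \<and> (\<forall>f. Cb (states n m) f \<longrightarrow>
            ((\<lambda>lam. supnorm (states n m)
               (\<lambda>z. kapply (PL n m u eps lam) f z - kapply (kcomp (Qone n m u eps) PiK) f z))
               \<longlongrightarrow> 0) (at_right 0))
       \<and> (\<forall>lam M. 0 < lam \<and> lam \<le> 1 \<longrightarrow> ipm (states n m) (Plam n m u eps lam) M \<longrightarrow>
            ipm (states n m) (PL n m u eps lam) M)
       \<and> (\<forall>ls Ms \<nu>. (\<forall>k. 0 < ls k \<and> ls k \<le> 1) \<longrightarrow> ls \<longlonglongrightarrow> 0 \<longrightarrow>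
            (\<forall>k. ipm (states n m) (Plam n m u eps (ls k)) (Ms k)) \<longrightarrow>
            \<nu> \<in> prob_measures (states n m) \<longrightarrow> weak_conv_Cb (states n m) Ms \<nu> \<longrightarrow>
            ipm (states n m) (kcomp (Qone n m u eps) PiK) \<nu>)"
proof -
  interpret gameP n m u eps PiK
    by unfold_locales (use n_pos acts upos eps_pos eps_small Pi_lim Pi_supp in auto)
  show ?thesis
  proof (intro conjI allI impI)
    fix f assume "Cb (states n m) f"
    then show "((\<lambda>lam. supnorm (states n m)
               (\<lambda>z. kapply (Rlam n m u eps lam) f z - kapply PiK f z)) \<longlongrightarrow> 0) (at_right 0)"
      by (rule part_a)
  next
    fix f assume "Cb (states n m) f"
    then show "((\<lambda>lam. supnorm (states n m)
               (\<lambda>z. kapply (PL n m u eps lam) f z - kapply (kcomp (Qone n m u eps) PiK) f z))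
               \<longlongrightarrow> 0) (at_right 0)"
      by (rule part_b)
  next
    fix lam M assume "0 < lam \<and> lam \<le> 1" "ipm (states n m) (Plam n m u eps lam) M"
    then show "ipm (states n m) (PL n m u eps lam) M" using part_c by blast
  next
    fix ls Ms \<nu>
    assume "\<forall>k. 0 < ls k \<and> ls k \<le> 1" "ls \<longlonglongrightarrow> 0"
      "\<forall>k. ipm (states n m) (Plam n m u eps (ls k)) (Ms k)"
      "\<nu> \<in> prob_measures (states n m)" "weak_conv_Cb (states n m) Ms \<nu>"
    then show "ipm (states n m) (kcomp (Qone n m u eps) PiK) \<nu>" by (rule part_d)
  qed
qed

end
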